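(* Let $(\Omega,\mathcal{F},\mathbb{P})$ be a complete probability space, $t_0<T$, $x_0$ a random variable and $a$ a stochastic process on $[t_0,T]$, and let $x(t,\omega)=x_0(\omega)\mathrm{e}^{\int_{t_0}^t a(s,\omega)\mathrm{d} s}$. Assume: (H1) $a\in \mathrm{L}^2([t_0,T]\times\Omega)$; (H2) for every $N\ge2$, $x_0$, $\xi_1$ and $(\xi_2,\ldots,\xi_N)$ are absolutely continuous and independent; (H3) the density $f_{\xi_1}$ of $\xi_1$ is Lipschitz on $\mathbb{R}$; (H4) $\int_{t_0}^t\phi_1(s)\,\mathrm{d} s\ne0$ for all $t\in(t_0,T]$. Then for each fixed $t\in(t_0,T]$, the sequence \[ f_1^N(x,t)=\int_{\mathbb{R}^N} f_0\big(x\,\mathrm{e}^{-K_a(t,\pmb{\xi}_N)}\big)f_{\pmb{\xi}_N}(\pmb{\xi}_N)\,\mathrm{e}^{-K_a(t,\pmb{\xi}_N)}\,\mathrm{d}\pmb{\xi}_N \] (where $f_0$ is the density of $x_0$) converges in $\mathrm{L}^\infty(J)$, for every $\delta>0$ and every bounded set $J\subseteq\mathbb{R}\setminus[-\delta,\delta]$, to a probability density $f_1(\cdot,t)$ of $x(t,\cdot)$.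
   Context: Karhunen–Loève expansion: for $a\in \mathrm{L}^2([t_0,T]\times\Omega)$ write $a(t,\omega)=\mu_a(t)+\sum_{j=1}^\infty\sqrt{\nu_j}\,\phi_j(t)\xi_j(\omega)$ (convergence in $\mathrm{L}^2([t_0,T]\times\Omega)$), where $\mu_a(t)=\mathbb{E}[a(t)]$, $\{(\nu_j,\phi_j)\}$ are the (nonnegative) eigenvalue/eigenfunction pairs of the covariance operator $\mathcal{C}f(t)=\int_{t_0}^T\mathrm{Cov}[a(t),a(s)]f(s)\,\mathrm{d} s$ on $\mathrm{L}^2([t_0,T])$ with $\{\phi_j\}$ an orthonormal basis, and $\xi_j$ are zero-mean, unit-variance, pairwise uncorrelated random variables; the pairs may be enumerated in any order (here $\nu_1>0$). $\pmb{\xi}_N=(\xi_1,\ldots,\xi_N)$, $f_{\pmb{\xi}_N}$ its density, $K_a(t,\pmb{\xi}_N)=\int_{t_0}^t\big(\mu_a(s)+\sum_{j=1}^N\sqrt{\nu_j}\phi_j(s)\xi_j\big)\mathrm{d} s$. *)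

theory Defs
  imports "HOL-Probability.Probability"
begin

definition proc_mean :: "'a measure \<Rightarrow> (real \<Rightarrow> 'a \<Rightarrow> real) \<Rightarrow> real \<Rightarrow> real" where
  "proc_mean M a t = (\<integral>\<omega>. a t \<omega> \<partial>M)"

definition proc_cov :: "'a measure \<Rightarrow> (real \<Rightarrow> 'a \<Rightarrow> real) \<Rightarrow> real \<Rightarrow> real \<Rightarrow> real" where
  "proc_cov M a t s =
     (\<integral>\<omega>. (a t \<omega> - proc_mean M a t) * (a s \<omega> - proc_mean M a s) \<partial>M)"

definition time_prod :: "real \<Rightarrow> real \<Rightarrow> 'a measure \<Rightarrow> (real \<times> 'a) measure" where
  "time_prod t0 T M = restrict_space lborel {t0..T} \<Otimes>\<^sub>M M"

definition L2_interval :: "real \<Rightarrow> real \<Rightarrow> (real \<Rightarrow> real) \<Rightarrow> bool" where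
  "L2_interval t0 T g \<longleftrightarrow> g \<in> borel_measurable (restrict_space lborel {t0..T})
      \<and> set_integrable lborel {t0..T} (\<lambda>s. (g s)\<^sup>2)"

text \<open>Karhunen--Loeve data for a (indices j \<ge> 1):
  (nu j, phi j) are the eigenpairs of the covariance operator, nu j \<ge> 0, the phi j form an
  orthonormal basis of L^2([t0,T]), the xi j are zero-mean, unit-variance, pairwise uncorrelated
  random variables and the series converges to a in L^2([t0,T] x Omega).\<close>
definition KL_expansion ::
  "'a measure \<Rightarrow> real \<Rightarrow> real \<Rightarrow> (real \<Rightarrow> 'a \<Rightarrow> real) \<Rightarrow> (nat \<Rightarrow> real)
     \<Rightarrow> (nat \<Rightarrow> real \<Rightarrow> real) \<Rightarrow> (nat \<Rightarrow> 'a \<Rightarrow> real) \<Rightarrow> bool" where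
  "KL_expansion M t0 T a \<nu> \<phi> \<xi> \<longleftrightarrow>
     (\<forall>j\<ge>1. \<nu> j \<ge> 0)
   \<and> (\<forall>j\<ge>1. L2_interval t0 T (\<phi> j))
   \<and> (\<forall>i\<ge>1. \<forall>j\<ge>1. (LINT s:{t0..T}|lborel. \<phi> i s * \<phi> j s) = (if i = j then 1 else 0))
   \<and> (\<forall>g. L2_interval t0 T g \<longrightarrow> (\<forall>j\<ge>1. (LINT s:{t0..T}|lborel. g s * \<phi> j s) = 0)
          \<longrightarrow> (AE s in restrict_space lborel {t0..T}. g s = 0))
   \<and> (\<forall>j\<ge>1. AE t in restrict_space lborel {t0..T}.
          (LINT s:{t0..T}|lborel. proc_cov M a t s * \<phi> j s) = \<nu> j * \<phi> j t)
   \<and> (\<forall>j\<ge>1. \<xi> j \<in> borel_measurable M \<and> integrable M (\<lambda>\<omega>. (\<xi> j \<omega>)\<^sup>2)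
          \<and> (\<integral>\<omega>. \<xi> j \<omega> \<partial>M) = 0)
   \<and> (\<forall>i\<ge>1. \<forall>j\<ge>1. (\<integral>\<omega>. \<xi> i \<omega> * \<xi> j \<omega> \<partial>M) = (if i = j then 1 else 0))
   \<and> (\<lambda>N. \<integral>p. (a (fst p) (snd p) - proc_mean M a (fst p)
              - (\<Sum>j=1..N. sqrt (\<nu> j) * \<phi> j (fst p) * \<xi> j (snd p)))\<^sup>2 \<partial>time_prod t0 T M)
       \<longlonglongrightarrow> 0"

definition K_a :: "'a measure \<Rightarrow> real \<Rightarrow> (real \<Rightarrow> 'a \<Rightarrow> real) \<Rightarrow> (nat \<Rightarrow> real)
     \<Rightarrow> (nat \<Rightarrow> real \<Rightarrow> real) \<Rightarrow> nat \<Rightarrow> real \<Rightarrow> (nat \<Rightarrow> real) \<Rightarrow> real" where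
  "K_a M t0 a \<nu> \<phi> N t y =
     (LINT s:{t0..t}|lborel. proc_mean M a s + (\<Sum>j=1..N. sqrt (\<nu> j) * \<phi> j s * y j))"

definition f1_approx :: "'a measure \<Rightarrow> real \<Rightarrow> (real \<Rightarrow> 'a \<Rightarrow> real) \<Rightarrow> (nat \<Rightarrow> real)
     \<Rightarrow> (nat \<Rightarrow> real \<Rightarrow> real) \<Rightarrow> (real \<Rightarrow> real) \<Rightarrow> (nat \<Rightarrow> (nat \<Rightarrow> real) \<Rightarrow> real)
     \<Rightarrow> nat \<Rightarrow> real \<Rightarrow> real \<Rightarrow> real" where
  "f1_approx M t0 a \<nu> \<phi> f0 fxi N x t =
     (\<integral>y. f0 (x * exp (- K_a M t0 a \<nu> \<phi> N t y)) * fxi N y * exp (- K_a M t0 a \<nu> \<phi> N t y)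
        \<partial>(\<Pi>\<^sub>M j\<in>{1..N}. lborel))"

end

theory Submission
  imports Defs
begin

lemma lip_dens_bounded:
  fixes f :: "real \<Rightarrow> real"
  assumes lip: "L-lipschitz_on UNIV f" and nn: "\<And>x. f x \<ge> 0"
    and int1: "(\<integral>\<^sup>+x. ennreal (f x) \<partial>lborel) = 1"
  shows "f x \<le> 2 * (L + 1) + 1"
proof -
  define L' where "L' = L + 1"
  have L0: "L \<ge> 0" using lipschitz_on_nonneg[OF lip] .
  have L'pos: "L' > 0" using L0 by (simp add: L'_def)
  have lip': "\<And>u v. dist (f u) (f v) \<le> L' * dist u v"
  proof -
    fix u v
    have "dist (f u) (f v) \<le> L * dist u v" using lip by (simp add: lipschitz_on_def)
    also have "\<dots> \<le> L' * dist u v" by (simp add: L'_def mult_right_mono)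
    finally show "dist (f u) (f v) \<le> L' * dist u v" .
  qed
  define h where "h = f x"
  define r where "r = h / (2 * L')"
  have h0: "h \<ge> 0" using nn by (simp add: h_def)
  have r0: "r \<ge> 0" using h0 L'pos by (simp add: r_def)
  have lowb: "h / 2 * indicator {x - r..x + r} u \<le> f u" for u
  proof (cases "u \<in> {x - r..x + r}")
    case True
    then have "\<bar>u - x\<bar> \<le> r" by auto
    have "\<bar>f u - h\<bar> \<le> L' * \<bar>u - x\<bar>" using lip'[of u x] by (simp add: dist_real_def h_def)
    also have "\<dots> \<le> L' * r" using \<open>\<bar>u - x\<bar> \<le> r\<close> L'pos by (simp add: mult_left_mono)
    also have "\<dots> = h / 2" using L'pos by (simp add: r_def)
    finally have "\<bar>f u - h\<bar> \<le> h / 2" .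
    then have "h / 2 \<le> f u" by linarith
    then show ?thesis using True by simp
  next
    case False then show ?thesis using nn[of u] by simp
  qed
  have "ennreal (h / 2) * ennreal (2 * r) = (\<integral>\<^sup>+u. ennreal (h / 2) * indicator {x - r..x + r} u \<partial>lborel)"
    using r0 by (simp add: nn_integral_cmult_indicator)
  also have "\<dots> \<le> (\<integral>\<^sup>+u. ennreal (f u) \<partial>lborel)"
    apply (rule nn_integral_mono)
    using lowb h0 by (metis ennreal_leI ennreal_mult' indicator_mult_ennreal mult.commute)
  finally have "ennreal (h / 2) * ennreal (2 * r) \<le> 1" using int1 by simp
  moreover have "ennreal (h / 2 * (2 * r)) = ennreal (h / 2) * ennreal (2 * r)"
    by (rule ennreal_mult) (use h0 r0 in auto)
  ultimately have "ennreal (h / 2 * (2 * r)) \<le> 1" by simp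
  then have "h / 2 * (2 * r) \<le> 1" by (simp add: ennreal_le_1)
  then have "h * h \<le> 2 * L'" using L'pos by (simp add: r_def field_simps)
  then have "h \<le> 2 * L' + 1"
    by (cases "h \<le> 1") (use L'pos in \<open>auto\<close>, smt (verit) mult_le_cancel_left1)
  then show ?thesis by (simp add: h_def L'_def)
qed

lemma SUP_indicator_Icc_nat:
  "(SUP n::nat. ennreal (indicator {- real n..real n} s)) = 1"
proof (rule antisym)
  show "(SUP n::nat. ennreal (indicator {- real n..real n} s)) \<le> 1"
    by (rule SUP_least) (simp add: indicator_def)
  obtain n :: nat where "\<bar>s\<bar> \<le> real n" using real_arch_simple by blast
  then have "s \<in> {- real n..real n}" by (simp add: abs_le_iff)
  then have h1: "ennreal (indicator {- real n..real n} s) = 1" by simp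
  show "1 \<le> (SUP n::nat. ennreal (indicator {- real n..real n} s))"
    by (rule SUP_upper2[where i=n]) (simp_all add: h1)
qed

lemma exp_subst_le:
  fixes g :: "real \<Rightarrow> real"
  assumes [measurable]: "g \<in> borel_measurable borel" and nn: "\<And>x. g x \<ge> 0"
  shows "(\<integral>\<^sup>+s. ennreal (g (exp s) * exp s) \<partial>lborel) \<le> (\<integral>\<^sup>+w. ennreal (g w) \<partial>lborel)"
proof -
  define F where "F n s = ennreal (g (exp s) * exp s * indicator {- real n..real n} s)" for n :: nat and s
  have inc: "incseq F"
  proof (rule incseq_SucI, rule le_funI)
    fix n s
    have i: "indicator {- real n..real n} s \<le> (indicator {- real (Suc n)..real (Suc n)} s :: real)"
      by (simp add: indicator_def)
    have "0 \<le> g (exp s) * exp s" using nn by simp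
    then show "F n s \<le> F (Suc n) s" unfolding F_def
      by (intro ennreal_leI mult_left_mono i)
  qed
  have Fm: "\<And>n. F n \<in> borel_measurable lborel" unfolding F_def by measurable
  have sup: "(SUP n. F n s) = ennreal (g (exp s) * exp s)" for s
  proof -
    have "(SUP n. F n s) = (SUP n. ennreal (g (exp s) * exp s) * ennreal (indicator {- real n..real n} s))"
      unfolding F_def using nn by (intro SUP_cong refl) (simp add: ennreal_mult)
    also have "\<dots> = ennreal (g (exp s) * exp s) * (SUP n::nat. ennreal (indicator {- real n..real n} s))"
      by (simp add: SUP_mult_left_ennreal)
    finally show ?thesis by (simp add: SUP_indicator_Icc_nat)
  qed
  have e1: "(\<integral>\<^sup>+s. ennreal (g (exp s) * exp s) \<partial>lborel) = (SUP n. \<integral>\<^sup>+s. F n s \<partial>lborel)"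
    unfolding sup[symmetric] by (rule nn_integral_monotone_convergence_SUP[OF inc Fm])
  have e2: "(SUP n. \<integral>\<^sup>+s. F n s \<partial>lborel) \<le> (\<integral>\<^sup>+w. ennreal (g w) \<partial>lborel)"
  proof (rule SUP_least)
    fix n :: nat
    have "(\<integral>\<^sup>+s. F n s \<partial>lborel) = (\<integral>\<^sup>+w. ennreal (g w * indicator {exp (- real n)..exp (real n)} w) \<partial>lborel)"
      unfolding F_def
    proof (rule nn_integral_substitution[where g=exp and g'=exp, symmetric])
      show "set_borel_measurable borel {exp (- real n)..exp (real n)} g"
        unfolding set_borel_measurable_def by measurable
    qed (auto intro!: derivative_eq_intros continuous_on_exp continuous_on_id)
    also have "\<dots> \<le> (\<integral>\<^sup>+w. ennreal (g w) \<partial>lborel)"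
      using nn by (intro nn_integral_mono ennreal_leI) (auto simp: indicator_def)
    finally show "(\<integral>\<^sup>+s. F n s \<partial>lborel) \<le> (\<integral>\<^sup>+w. ennreal (g w) \<partial>lborel)" .
  qed
  show ?thesis using e1 e2 by simp
qed

lemma A_bound_pos:
  fixes f0 :: "real \<Rightarrow> real"
  assumes [measurable]: "f0 \<in> borel_measurable borel" and nn: "\<And>x. f0 x \<ge> 0"
    and tot: "(\<integral>\<^sup>+w. ennreal (f0 w) \<partial>lborel) \<le> 1" and x: "x > 0"
  shows "(\<integral>\<^sup>+v. ennreal (f0 (x * exp (- v)) * exp (- v)) \<partial>lborel) \<le> ennreal (1 / x)"
proof -
  have "(\<integral>\<^sup>+v. ennreal (f0 (x * exp (- v)) * exp (- v)) \<partial>lborel)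
      = ennreal \<bar>-1::real\<bar> * (\<integral>\<^sup>+s. ennreal (f0 (x * exp (- (ln x + -1 * s))) * exp (- (ln x + -1 * s))) \<partial>lborel)"
    by (rule nn_integral_real_affine) auto
  also have "\<dots> = (\<integral>\<^sup>+s. ennreal (1 / x) * ennreal (f0 (exp s) * exp s) \<partial>lborel)"
  proof -
    have eq: "f0 (x * exp (- (ln x + -1 * s))) * exp (- (ln x + -1 * s)) = 1 / x * (f0 (exp s) * exp s)" for s
      using x by (simp add: exp_diff exp_minus field_simps)
    have e2: "ennreal (f0 (x * exp (- (ln x + -1 * s))) * exp (- (ln x + -1 * s))) = ennreal (1 / x) * ennreal (f0 (exp s) * exp s)" for s
      unfolding eq by (rule ennreal_mult) (use x nn in auto)
    show ?thesis by (simp only: e2) simp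
  qed
  also have "\<dots> = ennreal (1 / x) * (\<integral>\<^sup>+s. ennreal (f0 (exp s) * exp s) \<partial>lborel)"
    by (rule nn_integral_cmult) measurable
  also have "\<dots> \<le> ennreal (1 / x) * 1"
    using exp_subst_le[of f0] nn tot by (intro mult_left_mono) auto
  finally show ?thesis by simp
qed

lemma A_bound:
  fixes f0 :: "real \<Rightarrow> real"
  assumes [measurable]: "f0 \<in> borel_measurable borel" and nn: "\<And>x. f0 x \<ge> 0"
    and tot: "(\<integral>\<^sup>+w. ennreal (f0 w) \<partial>lborel) \<le> 1" and x: "x \<noteq> 0"
  shows "(\<integral>\<^sup>+v. ennreal (f0 (x * exp (- v)) * exp (- v)) \<partial>lborel) \<le> ennreal (1 / \<bar>x\<bar>)"
proof (cases "x > 0")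
  case True then show ?thesis using A_bound_pos[OF assms(1) nn tot True] by simp
next
  case False
  then have xn: "- x > 0" using x by simp
  have m: "(\<lambda>w. f0 (- w)) \<in> borel_measurable borel" by measurable
  have "(\<integral>\<^sup>+w. ennreal (f0 w) \<partial>lborel) = ennreal \<bar>-1::real\<bar> * (\<integral>\<^sup>+w. ennreal (f0 (0 + -1 * w)) \<partial>lborel)"
    by (rule nn_integral_real_affine) auto
  then have tot': "(\<integral>\<^sup>+w. ennreal (f0 (- w)) \<partial>lborel) \<le> 1" using tot by simp
  have "(\<integral>\<^sup>+v. ennreal (f0 (- (- x * exp (- v))) * exp (- v)) \<partial>lborel) \<le> ennreal (1 / (- x))"
    using A_bound_pos[OF m _ tot' xn] nn by simp
  then show ?thesis using False by simp
qed

definition Psi :: "(real \<Rightarrow> real) \<Rightarrow> (real \<Rightarrow> real) \<Rightarrow> real \<Rightarrow> real \<Rightarrow> real \<Rightarrow> ennreal" where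
  "Psi f0 fU c x r = (\<integral>\<^sup>+u. ennreal (f0 (x * exp (- (c * u + r))) * exp (- (c * u + r)) * fU u) \<partial>lborel)"

lemma Psi_measurable[measurable]:
  assumes [measurable]: "f0 \<in> borel_measurable borel" "fU \<in> borel_measurable borel"
    and [measurable]: "X \<in> borel_measurable N" "R \<in> borel_measurable N"
  shows "(\<lambda>w. Psi f0 fU c (X w) (R w)) \<in> borel_measurable N"
  unfolding Psi_def by measurable

lemma Psi_subst:
  fixes f0 fU :: "real \<Rightarrow> real"
  assumes [measurable]: "f0 \<in> borel_measurable borel" "fU \<in> borel_measurable borel" and c: "c \<noteq> 0"
  shows "Psi f0 fU c x r = ennreal (1 / \<bar>c\<bar>) *
     (\<integral>\<^sup>+v. ennreal (f0 (x * exp (- v)) * exp (- v) * fU ((v - r) / c)) \<partial>lborel)"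
proof -
  have "(\<integral>\<^sup>+v. ennreal (f0 (x * exp (- v)) * exp (- v) * fU ((v - r) / c)) \<partial>lborel)
     = ennreal \<bar>c\<bar> * (\<integral>\<^sup>+u. ennreal (f0 (x * exp (- (r + c * u))) * exp (- (r + c * u)) * fU ((r + c * u - r) / c)) \<partial>lborel)"
    by (rule nn_integral_real_affine) (auto simp: c)
  also have "\<dots> = ennreal \<bar>c\<bar> * Psi f0 fU c x r"
    unfolding Psi_def using c by (simp add: add.commute)
  finally have "ennreal (1 / \<bar>c\<bar>) * (\<integral>\<^sup>+v. ennreal (f0 (x * exp (- v)) * exp (- v) * fU ((v - r) / c)) \<partial>lborel)
     = ennreal (1 / \<bar>c\<bar>) * (ennreal \<bar>c\<bar> * Psi f0 fU c x r)" by simp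
  also have "\<dots> = Psi f0 fU c x r"
    using c by (simp add: mult.assoc[symmetric] ennreal_mult[symmetric])
  finally show ?thesis by simp
qed

lemma Psi_bound:
  fixes f0 fU :: "real \<Rightarrow> real"
  assumes [measurable]: "f0 \<in> borel_measurable borel" "fU \<in> borel_measurable borel"
    and nn: "\<And>x. f0 x \<ge> 0" and tot: "(\<integral>\<^sup>+w. ennreal (f0 w) \<partial>lborel) \<le> 1"
    and fUb: "\<And>x. fU x \<le> B" and fUn: "\<And>x. fU x \<ge> 0" and c: "c \<noteq> 0" and x: "x \<noteq> 0"
  shows "Psi f0 fU c x r \<le> ennreal (B / (\<bar>c\<bar> * \<bar>x\<bar>))"
proof -
  have B0: "B \<ge> 0" using fUb[of 0] fUn[of 0] by simp
  have "Psi f0 fU c x r = ennreal (1 / \<bar>c\<bar>) *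
     (\<integral>\<^sup>+v. ennreal (f0 (x * exp (- v)) * exp (- v) * fU ((v - r) / c)) \<partial>lborel)"
    by (rule Psi_subst) (auto simp: c)
  also have "\<dots> \<le> ennreal (1 / \<bar>c\<bar>) * (\<integral>\<^sup>+v. ennreal B * ennreal (f0 (x * exp (- v)) * exp (- v)) \<partial>lborel)"
  proof (intro mult_left_mono nn_integral_mono)
    fix v
    have "f0 (x * exp (- v)) * exp (- v) * fU ((v - r) / c) \<le> B * (f0 (x * exp (- v)) * exp (- v))"
      using mult_left_mono[OF fUb[of "(v - r) / c"], of "f0 (x * exp (- v)) * exp (- v)"] nn[of "x * exp (- v)"]
      by (simp only: mult.commute) simp
    then show "ennreal (f0 (x * exp (- v)) * exp (- v) * fU ((v - r) / c)) \<le> ennreal B * ennreal (f0 (x * exp (- v)) * exp (- v))"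
      using B0 nn by (simp add: ennreal_mult[symmetric] ennreal_leI)
  qed simp
  also have "\<dots> = ennreal (1 / \<bar>c\<bar>) * (ennreal B * (\<integral>\<^sup>+v. ennreal (f0 (x * exp (- v)) * exp (- v)) \<partial>lborel))"
    by (subst nn_integral_cmult) auto
  also have "\<dots> \<le> ennreal (1 / \<bar>c\<bar>) * (ennreal B * ennreal (1 / \<bar>x\<bar>))"
    by (intro mult_left_mono A_bound) (auto simp: nn tot x)
  also have "\<dots> = ennreal (B / (\<bar>c\<bar> * \<bar>x\<bar>))"
    using B0 by (simp add: ennreal_mult[symmetric])
  finally show ?thesis .
qed

lemma Psi_lip:
  fixes f0 fU :: "real \<Rightarrow> real"
  assumes [measurable]: "f0 \<in> borel_measurable borel" "fU \<in> borel_measurable borel"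
    and nn: "\<And>x. f0 x \<ge> 0" and tot: "(\<integral>\<^sup>+w. ennreal (f0 w) \<partial>lborel) \<le> 1"
    and lip: "L-lipschitz_on UNIV fU" and fUn: "\<And>x. fU x \<ge> 0" and c: "c \<noteq> 0" and x: "x \<noteq> 0"
  shows "Psi f0 fU c x r \<le> Psi f0 fU c x r' + ennreal (L * \<bar>r - r'\<bar> / (c\<^sup>2 * \<bar>x\<bar>))"
proof -
  define k where "k = L * \<bar>r - r'\<bar> / \<bar>c\<bar>"
  have L0: "L \<ge> 0" using lipschitz_on_nonneg[OF lip] .
  have k0: "k \<ge> 0" using L0 by (simp add: k_def)
  let ?q = "\<lambda>v. f0 (x * exp (- v)) * exp (- v)"
  have q0: "?q v \<ge> 0" for v using nn by simp
  have fUl: "fU ((v - r) / c) \<le> fU ((v - r') / c) + k" for v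
  proof -
    have "dist (fU ((v - r) / c)) (fU ((v - r') / c)) \<le> L * dist ((v - r) / c) ((v - r') / c)"
      using lip by (simp add: lipschitz_on_def)
    also have "dist ((v - r) / c) ((v - r') / c) = \<bar>r - r'\<bar> / \<bar>c\<bar>"
    proof -
      have "(v - r) / c - (v - r') / c = (r' - r) / c" using c by (simp add: field_simps)
      then show ?thesis by (simp add: dist_real_def abs_minus_commute)
    qed
    finally show ?thesis by (simp add: k_def dist_real_def abs_le_iff)
  qed
  have "Psi f0 fU c x r = ennreal (1 / \<bar>c\<bar>) * (\<integral>\<^sup>+v. ennreal (?q v * fU ((v - r) / c)) \<partial>lborel)"
    by (rule Psi_subst) (auto simp: c)
  also have "\<dots> \<le> ennreal (1 / \<bar>c\<bar>) * (\<integral>\<^sup>+v. ennreal (?q v * fU ((v - r') / c)) + ennreal k * ennreal (?q v) \<partial>lborel)"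
  proof (intro mult_left_mono nn_integral_mono)
    fix v
    have "?q v * fU ((v - r) / c) \<le> ?q v * fU ((v - r') / c) + k * ?q v"
      using mult_left_mono[OF fUl q0, of v] by (simp add: algebra_simps)
    then show "ennreal (?q v * fU ((v - r) / c)) \<le> ennreal (?q v * fU ((v - r') / c)) + ennreal k * ennreal (?q v)"
      using k0 q0[of v] fUn[of "(v - r') / c"]
      by (simp add: ennreal_mult[symmetric] ennreal_plus[symmetric] del: ennreal_plus)
  qed simp
  also have "\<dots> = ennreal (1 / \<bar>c\<bar>) * ((\<integral>\<^sup>+v. ennreal (?q v * fU ((v - r') / c)) \<partial>lborel) + ennreal k * (\<integral>\<^sup>+v. ennreal (?q v) \<partial>lborel))"
    by (subst nn_integral_add) (auto simp: nn_integral_cmult)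
  also have "\<dots> \<le> ennreal (1 / \<bar>c\<bar>) * ((\<integral>\<^sup>+v. ennreal (?q v * fU ((v - r') / c)) \<partial>lborel) + ennreal k * ennreal (1 / \<bar>x\<bar>))"
    by (intro mult_left_mono add_left_mono A_bound) (auto simp: nn tot x)
  also have "\<dots> = Psi f0 fU c x r' + ennreal (1 / \<bar>c\<bar>) * (ennreal k * ennreal (1 / \<bar>x\<bar>))"
    by (subst Psi_subst[where r=r']) (auto simp: c distrib_left)
  also have "ennreal (1 / \<bar>c\<bar>) * (ennreal k * ennreal (1 / \<bar>x\<bar>)) = ennreal (L * \<bar>r - r'\<bar> / (c\<^sup>2 * \<bar>x\<bar>))"
  proof -
    have cc: "c\<^sup>2 = \<bar>c\<bar> * \<bar>c\<bar>" by (simp add: power2_eq_square)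
    have "1 / \<bar>c\<bar> * (k * (1 / \<bar>x\<bar>)) = L * \<bar>r - r'\<bar> / (c\<^sup>2 * \<bar>x\<bar>)"
      unfolding cc k_def by simp
    then show ?thesis using k0 by (simp add: ennreal_mult[symmetric])
  qed
  finally show ?thesis .
qed

lemma G3_meas:
  assumes Gm: "(\<lambda>p. G (fst p) (fst (snd p)) (snd (snd p))) \<in> borel_measurable (borel \<Otimes>\<^sub>M borel \<Otimes>\<^sub>M borel)"
    and [measurable]: "a \<in> borel_measurable N" "b \<in> borel_measurable N" "d \<in> borel_measurable N"
  shows "(\<lambda>x. G (a x) (b x) (d x)) \<in> borel_measurable N"
proof -
  have "(\<lambda>x. (a x, b x, d x)) \<in> N \<rightarrow>\<^sub>M (borel \<Otimes>\<^sub>M borel \<Otimes>\<^sub>M borel)" by measurable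
  from measurable_compose[OF this Gm] show ?thesis by simp
qed

lemma indep3_nn_integral:
  fixes X :: "nat \<Rightarrow> 'a \<Rightarrow> real" and G :: "real \<Rightarrow> real \<Rightarrow> real \<Rightarrow> ennreal"
  assumes M: "prob_space M"
    and ind: "prob_space.indep_vars M (\<lambda>_. lborel) X {0, 1, 2}"
    and d0: "distributed M lborel (X 0) (\<lambda>x. ennreal (f0 x))"
    and d1: "distributed M lborel (X 1) (\<lambda>x. ennreal (fU x))"
    and Gm: "(\<lambda>p. G (fst p) (fst (snd p)) (snd (snd p))) \<in> borel_measurable (borel \<Otimes>\<^sub>M borel \<Otimes>\<^sub>M borel)"
  shows "(\<integral>\<^sup>+\<omega>. G (X 0 \<omega>) (X 1 \<omega>) (X 2 \<omega>) \<partial>M)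
       = (\<integral>\<^sup>+\<omega>. (\<integral>\<^sup>+u. ennreal (fU u) * (\<integral>\<^sup>+w. ennreal (f0 w) * G w u (X 2 \<omega>) \<partial>lborel) \<partial>lborel) \<partial>M)"
proof -
  interpret prob_space M by fact
  note [measurable (raw)] = G3_meas[OF Gm]
  let ?I = "{0, 1, 2::nat}"
  have rv: "\<And>i. i \<in> ?I \<Longrightarrow> X i \<in> M \<rightarrow>\<^sub>M lborel"
    using ind unfolding indep_vars_def by auto
  have X2[measurable]: "X 2 \<in> borel_measurable M" using rv[of 2] by simp
  have f0m[measurable]: "(\<lambda>x. ennreal (f0 x)) \<in> borel_measurable borel" using d0 by (simp add: distributed_def)
  have fUm[measurable]: "(\<lambda>x. ennreal (fU x)) \<in> borel_measurable borel" using d1 by (simp add: distributed_def)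
  define P where "P i = (if i \<in> ?I then distr M lborel (X i) else lborel)" for i
  have P0: "P 0 = density lborel (\<lambda>x. ennreal (f0 x))" using d0 by (simp add: distributed_def P_def)
  have P1: "P 1 = density lborel (\<lambda>x. ennreal (fU x))" using d1 by (simp add: distributed_def P_def)
  have P2: "P 2 = distr M lborel (X 2)" by (simp add: P_def)
  have sP: "sets (P i) = sets borel" for i by (simp add: P_def)
  have psf: "product_sigma_finite P"
  proof (rule product_sigma_finite.intro)
    fix i
    show "sigma_finite_measure (P i)"
    proof (cases "i \<in> ?I")
      case True
      then have "prob_space (P i)" unfolding P_def using rv[OF True] True by (simp add: prob_space_distr)
      then show ?thesis by (simp add: prob_space_imp_sigma_finite)
    next
      case False
      then show ?thesis unfolding P_def by (simp add: lborel.sigma_finite_measure_axioms)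
    qed
  qed
  interpret P: product_sigma_finite P by fact
  have Pm: "(\<lambda>y. G (y 0) (y 1) (y 2)) \<in> borel_measurable (Pi\<^sub>M ?I P)"
  proof -
    have "(\<lambda>y. G (y 0) (y 1) (y 2)) \<in> borel_measurable (Pi\<^sub>M ?I (\<lambda>_. borel))" by measurable
    moreover have "sets (Pi\<^sub>M ?I P) = sets (Pi\<^sub>M ?I (\<lambda>_. borel))"
      by (intro sets_PiM_cong) (auto simp: sP)
    ultimately show ?thesis by (simp cong: measurable_cong_sets)
  qed
  have "(\<integral>\<^sup>+\<omega>. G (X 0 \<omega>) (X 1 \<omega>) (X 2 \<omega>) \<partial>M)
      = (\<integral>\<^sup>+\<omega>. (\<lambda>y. G (y 0) (y 1) (y 2)) (\<lambda>i\<in>?I. X i \<omega>) \<partial>M)" by simp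
  also have "\<dots> = (\<integral>\<^sup>+y. G (y 0) (y 1) (y 2) \<partial>distr M (Pi\<^sub>M ?I (\<lambda>_. lborel)) (\<lambda>\<omega>. \<lambda>i\<in>?I. X i \<omega>))"
  proof (rule nn_integral_distr[symmetric])
    show "(\<lambda>\<omega>. \<lambda>i\<in>?I. X i \<omega>) \<in> M \<rightarrow>\<^sub>M Pi\<^sub>M ?I (\<lambda>_. lborel)"
      using rv by (intro measurable_restrict) auto
    show "(\<lambda>y. G (y 0) (y 1) (y 2)) \<in> borel_measurable (distr M (Pi\<^sub>M ?I (\<lambda>_. lborel)) (\<lambda>\<omega>. \<lambda>i\<in>?I. X i \<omega>))"
      by simp measurable
  qed
  also have "distr M (Pi\<^sub>M ?I (\<lambda>_. lborel)) (\<lambda>\<omega>. \<lambda>i\<in>?I. X i \<omega>) = Pi\<^sub>M ?I P"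
  proof -
    have "distr M (Pi\<^sub>M ?I (\<lambda>_. lborel)) (\<lambda>\<omega>. \<lambda>i\<in>?I. X i \<omega>) = Pi\<^sub>M ?I (\<lambda>i. distr M lborel (X i))"
      using ind by (subst (asm) indep_vars_iff_distr_eq_PiM') (use rv in auto)
    also have "\<dots> = Pi\<^sub>M ?I P" by (intro PiM_cong) (auto simp: P_def)
    finally show ?thesis .
  qed
  also have "(\<integral>\<^sup>+y. G (y 0) (y 1) (y 2) \<partial>Pi\<^sub>M ?I P)
      = (\<integral>\<^sup>+r. (\<integral>\<^sup>+y. G (y 0) (y 1) r \<partial>Pi\<^sub>M {0,1} P) \<partial>P 2)"
  proof -
    have e: "?I = insert 2 {0,1}" by auto
    show ?thesis unfolding e
      by (subst P.product_nn_integral_insert_rev[OF _ _ Pm[unfolded e]]) auto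
  qed
  also have "\<dots> = (\<integral>\<^sup>+r. (\<integral>\<^sup>+u. (\<integral>\<^sup>+y. G (y 0) u r \<partial>Pi\<^sub>M {0} P) \<partial>P 1) \<partial>P 2)"
  proof (rule nn_integral_cong)
    fix r
    have e: "{0, 1::nat} = insert 1 {0}" by auto
    have m: "(\<lambda>y. G (y 0) (y 1) r) \<in> borel_measurable (Pi\<^sub>M (insert 1 {0}) P)"
    proof -
      have "(\<lambda>y. G (y 0) (y 1) r) \<in> borel_measurable (Pi\<^sub>M (insert 1 {0}) (\<lambda>_. borel))" by measurable
      moreover have "sets (Pi\<^sub>M (insert 1 {0}) P) = sets (Pi\<^sub>M (insert 1 {0}) (\<lambda>_. borel))"
        by (intro sets_PiM_cong) (auto simp: sP)
      ultimately show ?thesis by (simp cong: measurable_cong_sets)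
    qed
    show "(\<integral>\<^sup>+y. G (y 0) (y 1) r \<partial>Pi\<^sub>M {0,1} P) = (\<integral>\<^sup>+u. (\<integral>\<^sup>+y. G (y 0) u r \<partial>Pi\<^sub>M {0} P) \<partial>P 1)"
      unfolding e by (subst P.product_nn_integral_insert_rev[OF _ _ m]) auto
  qed
  also have "\<dots> = (\<integral>\<^sup>+r. (\<integral>\<^sup>+u. (\<integral>\<^sup>+w. G w u r \<partial>P 0) \<partial>P 1) \<partial>P 2)"
    by (intro nn_integral_cong P.product_nn_integral_singleton) (simp add: measurable_cong_sets[OF sP refl])
  also have "\<dots> = (\<integral>\<^sup>+\<omega>. (\<integral>\<^sup>+u. ennreal (fU u) * (\<integral>\<^sup>+w. ennreal (f0 w) * G w u (X 2 \<omega>) \<partial>lborel) \<partial>lborel) \<partial>M)"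
    unfolding P0 P1 P2
    by (subst nn_integral_distr) (auto simp: nn_integral_density)
  finally show ?thesis .
qed

lemma dens_facts:
  fixes f :: "real \<Rightarrow> real"
  assumes M: "prob_space M" and d: "distributed M lborel X (\<lambda>x. ennreal (f x))" and nn: "\<And>x. f x \<ge> 0"
  shows "f \<in> borel_measurable borel" "(\<integral>\<^sup>+x. ennreal (f x) \<partial>lborel) = 1"
proof -
  have m: "(\<lambda>x. ennreal (f x)) \<in> borel_measurable borel" using d by (simp add: distributed_def)
  have "(\<lambda>x. enn2real (ennreal (f x))) \<in> borel_measurable borel" using m by measurable
  then show "f \<in> borel_measurable borel" using nn by simp
  have X: "X \<in> M \<rightarrow>\<^sub>M lborel" using d by (simp add: distributed_def)
  have "(\<integral>\<^sup>+x. ennreal (f x) \<partial>lborel) = emeasure (density lborel (\<lambda>x. ennreal (f x))) UNIV"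
    using m by (subst emeasure_density) auto
  also have "\<dots> = emeasure (distr M lborel X) UNIV" using d by (simp add: distributed_def)
  also have "\<dots> = emeasure M (space M)" using X by (subst emeasure_distr) auto
  also have "\<dots> = 1" using M by (simp add: prob_space.emeasure_space_1)
  finally show "(\<integral>\<^sup>+x. ennreal (f x) \<partial>lborel) = 1" .
qed

lemma scale_lemma:
  fixes f0 :: "real \<Rightarrow> real"
  assumes [measurable]: "f0 \<in> borel_measurable borel" "A \<in> sets borel" and nn: "\<And>x. f0 x \<ge> 0"
  shows "(\<integral>\<^sup>+w. ennreal (f0 w) * indicator A (w * exp k) \<partial>lborel)
       = (\<integral>\<^sup>+x. indicator A x * ennreal (f0 (x * exp (- k)) * exp (- k)) \<partial>lborel)"
proof -
  have "(\<integral>\<^sup>+x. indicator A x * ennreal (f0 (x * exp (- k)) * exp (- k)) \<partial>lborel)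
      = ennreal \<bar>exp k\<bar> * (\<integral>\<^sup>+w. indicator A (0 + exp k * w) * ennreal (f0 ((0 + exp k * w) * exp (- k)) * exp (- k)) \<partial>lborel)"
    by (rule nn_integral_real_affine) auto
  also have "\<dots> = (\<integral>\<^sup>+w. ennreal (exp k) * (indicator A (0 + exp k * w) * ennreal (f0 ((0 + exp k * w) * exp (- k)) * exp (- k))) \<partial>lborel)"
    by (subst nn_integral_cmult) auto
  also have "\<dots> = (\<integral>\<^sup>+w. ennreal (f0 w) * indicator A (w * exp k) \<partial>lborel)"
  proof (rule nn_integral_cong)
    fix w
    have e1: "(0 + exp k * w) * exp (- k) = w" by (simp add: exp_minus field_simps)
    have e2: "ennreal (exp k) * ennreal (f0 w * exp (- k)) = ennreal (f0 w)"
      using nn[of w] by (simp add: ennreal_mult[symmetric] exp_minus field_simps)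
    show "ennreal (exp k) * (indicator A (0 + exp k * w) * ennreal (f0 ((0 + exp k * w) * exp (- k)) * exp (- k))) = ennreal (f0 w) * indicator A (w * exp k)"
    proof -
      have "ennreal (exp k) * (indicator A (0 + exp k * w) * ennreal (f0 ((0 + exp k * w) * exp (- k)) * exp (- k)))
          = indicator A (w * exp k) * (ennreal (exp k) * ennreal (f0 w * exp (- k)))"
        unfolding e1 unfolding add_0_left mult.commute[of "exp k" w] by (rule mult.left_commute)
      also have "\<dots> = indicator A (w * exp k) * ennreal (f0 w)" by (simp only: e2)
      finally show ?thesis by (simp only: mult.commute)
    qed
  qed
  finally show ?thesis ..
qed

lemma core_density:
  fixes x0 U R :: "'a \<Rightarrow> real"
  assumes M: "prob_space M"
    and ind: "prob_space.indep_vars M (\<lambda>_. lborel) (\<lambda>k. if k = 0 then x0 else if k = 1 then U else R) {0, 1, 2::nat}"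
    and d0: "distributed M lborel x0 (\<lambda>x. ennreal (f0 x))" and f0n: "\<And>x. f0 x \<ge> 0"
    and d1: "distributed M lborel U (\<lambda>x. ennreal (fU x))" and fUn: "\<And>x. fU x \<ge> 0"
    and fUb: "\<And>x. fU x \<le> B" and c: "c \<noteq> 0"
  shows "distributed M lborel (\<lambda>\<omega>. x0 \<omega> * exp (c * U \<omega> + R \<omega>))
            (\<lambda>x. ennreal (enn2real (\<integral>\<^sup>+\<omega>. Psi f0 fU c x (R \<omega>) \<partial>M)))"
proof -
  interpret prob_space M by fact
  define X where "X = (\<lambda>k::nat. if k = 0 then x0 else if k = 1 then U else R)"
  have rv: "\<And>i. i \<in> {0,1,2} \<Longrightarrow> X i \<in> M \<rightarrow>\<^sub>M lborel"
    using ind unfolding indep_vars_def X_def by auto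
  have [measurable]: "x0 \<in> borel_measurable M" "U \<in> borel_measurable M" "R \<in> borel_measurable M"
    using rv[of 0] rv[of 1] rv[of 2] by (auto simp: X_def)
  have f0m[measurable]: "f0 \<in> borel_measurable borel" and f0i: "(\<integral>\<^sup>+x. ennreal (f0 x) \<partial>lborel) = 1"
    using dens_facts[OF M d0 f0n] by auto
  have fUm[measurable]: "fU \<in> borel_measurable borel" and fUi: "(\<integral>\<^sup>+x. ennreal (fU x) \<partial>lborel) = 1"
    using dens_facts[OF M d1 fUn] by auto
  define F where "F x = (\<integral>\<^sup>+\<omega>. Psi f0 fU c x (R \<omega>) \<partial>M)" for x
  have Fm[measurable]: "F \<in> borel_measurable borel"
    unfolding F_def by measurable
  have psM: "pair_sigma_finite lborel M"
    by (simp add: pair_sigma_finite_def prob_space_imp_sigma_finite[OF M] lborel.sigma_finite_measure_axioms)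
  have Xm[measurable]: "(\<lambda>\<omega>. x0 \<omega> * exp (c * U \<omega> + R \<omega>)) \<in> borel_measurable M" by measurable
  have eq: "distr M lborel (\<lambda>\<omega>. x0 \<omega> * exp (c * U \<omega> + R \<omega>)) = density lborel F"
  proof (rule measure_eqI)
    fix A assume "A \<in> sets (distr M lborel (\<lambda>\<omega>. x0 \<omega> * exp (c * U \<omega> + R \<omega>)))"
    then have A[measurable]: "A \<in> sets borel" by simp
    have "emeasure (distr M lborel (\<lambda>\<omega>. x0 \<omega> * exp (c * U \<omega> + R \<omega>))) A
        = emeasure M ((\<lambda>\<omega>. x0 \<omega> * exp (c * U \<omega> + R \<omega>)) -` A \<inter> space M)"
      by (rule emeasure_distr) simp_all
    also have "\<dots> = (\<integral>\<^sup>+\<omega>. indicator ((\<lambda>\<omega>. x0 \<omega> * exp (c * U \<omega> + R \<omega>)) -` A \<inter> space M) \<omega> \<partial>M)"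
      by (rule nn_integral_indicator[symmetric]) measurable
    also have "\<dots> = (\<integral>\<^sup>+\<omega>. indicator A (x0 \<omega> * exp (c * U \<omega> + R \<omega>)) \<partial>M)"
      by (rule nn_integral_cong) (simp add: indicator_def)
    also have "\<dots> = (\<integral>\<^sup>+\<omega>. (\<lambda>w u r. indicator A (w * exp (c * u + r))) (X 0 \<omega>) (X 1 \<omega>) (X 2 \<omega>) \<partial>M)"
      by (simp add: X_def)
    also have "\<dots> = (\<integral>\<^sup>+\<omega>. (\<integral>\<^sup>+u. ennreal (fU u) * (\<integral>\<^sup>+w. ennreal (f0 w) * indicator A (w * exp (c * u + X 2 \<omega>)) \<partial>lborel) \<partial>lborel) \<partial>M)"
      by (rule indep3_nn_integral[OF M ind[folded X_def]]) (auto simp: X_def d0 d1)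
    also have "\<dots> = (\<integral>\<^sup>+\<omega>. (\<integral>\<^sup>+u. (\<integral>\<^sup>+x. indicator A x * ennreal (f0 (x * exp (- (c * u + R \<omega>))) * exp (- (c * u + R \<omega>)) * fU u) \<partial>lborel) \<partial>lborel) \<partial>M)"
    proof (intro nn_integral_cong)
      fix \<omega> u
      have "ennreal (fU u) * (\<integral>\<^sup>+w. ennreal (f0 w) * indicator A (w * exp (c * u + X 2 \<omega>)) \<partial>lborel)
          = ennreal (fU u) * (\<integral>\<^sup>+x. indicator A x * ennreal (f0 (x * exp (- (c * u + R \<omega>))) * exp (- (c * u + R \<omega>))) \<partial>lborel)"
        by (simp add: X_def scale_lemma f0n)
      also have "\<dots> = (\<integral>\<^sup>+x. ennreal (fU u) * (indicator A x * ennreal (f0 (x * exp (- (c * u + R \<omega>))) * exp (- (c * u + R \<omega>)))) \<partial>lborel)"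
        by (subst nn_integral_cmult) auto
      also have "\<dots> = (\<integral>\<^sup>+x. indicator A x * ennreal (f0 (x * exp (- (c * u + R \<omega>))) * exp (- (c * u + R \<omega>)) * fU u) \<partial>lborel)"
        using f0n fUn by (intro nn_integral_cong) (simp add: ennreal_mult mult_ac)
      finally show "ennreal (fU u) * (\<integral>\<^sup>+w. ennreal (f0 w) * indicator A (w * exp (c * u + X 2 \<omega>)) \<partial>lborel)
          = (\<integral>\<^sup>+x. indicator A x * ennreal (f0 (x * exp (- (c * u + R \<omega>))) * exp (- (c * u + R \<omega>)) * fU u) \<partial>lborel)" .
    qed
    also have "\<dots> = (\<integral>\<^sup>+\<omega>. (\<integral>\<^sup>+x. indicator A x * Psi f0 fU c x (R \<omega>) \<partial>lborel) \<partial>M)"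
    proof (rule nn_integral_cong)
      fix \<omega>
      have "(\<integral>\<^sup>+u. (\<integral>\<^sup>+x. indicator A x * ennreal (f0 (x * exp (- (c * u + R \<omega>))) * exp (- (c * u + R \<omega>)) * fU u) \<partial>lborel) \<partial>lborel)
          = (\<integral>\<^sup>+x. (\<integral>\<^sup>+u. indicator A x * ennreal (f0 (x * exp (- (c * u + R \<omega>))) * exp (- (c * u + R \<omega>)) * fU u) \<partial>lborel) \<partial>lborel)"
        by (rule lborel_pair.Fubini') measurable
      also have "\<dots> = (\<integral>\<^sup>+x. indicator A x * Psi f0 fU c x (R \<omega>) \<partial>lborel)"
        unfolding Psi_def by (intro nn_integral_cong, subst nn_integral_cmult) auto
      finally show "(\<integral>\<^sup>+u. (\<integral>\<^sup>+x. indicator A x * ennreal (f0 (x * exp (- (c * u + R \<omega>))) * exp (- (c * u + R \<omega>)) * fU u) \<partial>lborel) \<partial>lborel)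
          = (\<integral>\<^sup>+x. indicator A x * Psi f0 fU c x (R \<omega>) \<partial>lborel)" .
    qed
    also have "\<dots> = (\<integral>\<^sup>+x. (\<integral>\<^sup>+\<omega>. indicator A x * Psi f0 fU c x (R \<omega>) \<partial>M) \<partial>lborel)"
      by (rule pair_sigma_finite.Fubini'[OF psM]) measurable
    also have "\<dots> = (\<integral>\<^sup>+x. F x * indicator A x \<partial>lborel)"
      unfolding F_def by (intro nn_integral_cong, subst nn_integral_cmult) (auto simp: mult.commute)
    also have "\<dots> = emeasure (density lborel F) A"
      by (subst emeasure_density) (auto simp: mult.commute)
    finally show "emeasure (distr M lborel (\<lambda>\<omega>. x0 \<omega> * exp (c * U \<omega> + R \<omega>))) A = emeasure (density lborel F) A" .
  qed simp
  have fin: "F x = ennreal (enn2real (F x))" if "x \<noteq> 0" for x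
  proof -
    have "F x \<le> (\<integral>\<^sup>+\<omega>. ennreal (B / (\<bar>c\<bar> * \<bar>x\<bar>)) \<partial>M)"
      unfolding F_def by (intro nn_integral_mono Psi_bound) (auto simp: f0n f0i fUb fUn c that)
    also have "\<dots> < \<infinity>" by (simp add: emeasure_space_1)
    finally show ?thesis by (simp add: less_top[symmetric])
  qed
  have ae: "AE x in lborel. F x = ennreal (enn2real (F x))"
    using AE_lborel_singleton[of 0] by (rule AE_mp) (rule AE_I2, rule impI, erule fin)
  have dc: "density lborel F = density lborel (\<lambda>x. ennreal (enn2real (F x)))"
    by (rule density_cong[OF _ _ ae]) (simp_all add: Fm)
  have Fm': "(\<lambda>x. ennreal (enn2real (F x))) \<in> borel_measurable lborel" using Fm by measurable
  show ?thesis unfolding distributed_def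
  proof (intro conjI)
    show "distr M lborel (\<lambda>\<omega>. x0 \<omega> * exp (c * U \<omega> + R \<omega>)) = density lborel (\<lambda>x. ennreal (enn2real (\<integral>\<^sup>+\<omega>. Psi f0 fU c x (R \<omega>) \<partial>M)))"
      using eq dc unfolding F_def by simp
    show "(\<lambda>x. ennreal (enn2real (\<integral>\<^sup>+\<omega>. Psi f0 fU c x (R \<omega>) \<partial>M))) \<in> borel_measurable lborel"
      using Fm' unfolding F_def .
  qed simp
qed

definition psi where "psi f0 fU c x r = enn2real (Psi f0 fU c x r)"

lemma psi_props:
  fixes f0 fU :: "real \<Rightarrow> real"
  assumes [measurable]: "f0 \<in> borel_measurable borel" "fU \<in> borel_measurable borel"
    and nn: "\<And>x. f0 x \<ge> 0" and tot: "(\<integral>\<^sup>+w. ennreal (f0 w) \<partial>lborel) \<le> 1"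
    and lip: "L-lipschitz_on UNIV fU" and fUn: "\<And>x. fU x \<ge> 0" and fUb: "\<And>x. fU x \<le> B"
    and c: "c \<noteq> 0" and x: "x \<noteq> 0"
  shows "Psi f0 fU c x r = ennreal (psi f0 fU c x r)" "psi f0 fU c x r \<ge> 0"
    "psi f0 fU c x r \<le> B / (\<bar>c\<bar> * \<bar>x\<bar>)"
    "\<bar>psi f0 fU c x r - psi f0 fU c x r'\<bar> \<le> L * \<bar>r - r'\<bar> / (c\<^sup>2 * \<bar>x\<bar>)"
proof -
  have b: "Psi f0 fU c x r \<le> ennreal (B / (\<bar>c\<bar> * \<bar>x\<bar>))" for r
    by (rule Psi_bound) (auto simp: nn tot fUb fUn c x)
  have fin: "Psi f0 fU c x r = ennreal (psi f0 fU c x r)" for r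
  proof -
    have "Psi f0 fU c x r < \<infinity>" using b[of r] by (simp add: le_less_trans)
    then show ?thesis unfolding psi_def by (simp add: less_top[symmetric])
  qed
  show "Psi f0 fU c x r = ennreal (psi f0 fU c x r)" by (rule fin)
  show "psi f0 fU c x r \<ge> 0" by (simp add: psi_def)
  show "psi f0 fU c x r \<le> B / (\<bar>c\<bar> * \<bar>x\<bar>)"
  proof -
    have "ennreal (psi f0 fU c x r) \<le> ennreal (B / (\<bar>c\<bar> * \<bar>x\<bar>))" using b[of r] fin[of r] by simp
    moreover have "B \<ge> 0" using fUb[of 0] fUn[of 0] by simp
    then have "0 \<le> B / (\<bar>c\<bar> * \<bar>x\<bar>)" by simp
    ultimately show ?thesis by (auto simp add: ennreal_le_iff2)
  qed
  define K where "K = L * \<bar>r - r'\<bar> / (c\<^sup>2 * \<bar>x\<bar>)"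
  have K0: "K \<ge> 0" using lipschitz_on_nonneg[OF lip] by (simp add: K_def)
  have l1: "psi f0 fU c x r \<le> psi f0 fU c x r' + K" (is "psi _ _ _ _ ?a \<le> psi _ _ _ _ ?b + _")
  proof -
    have "ennreal (psi f0 fU c x r) \<le> ennreal (psi f0 fU c x r') + ennreal K"
      using Psi_lip[of f0 fU L c x r r'] fin[of r] fin[of r'] by (simp add: nn tot lip fUn c x K_def)
    also have "\<dots> = ennreal (psi f0 fU c x r' + K)" unfolding psi_def by (rule ennreal_plus[OF enn2real_nonneg K0, symmetric])
    finally have h: "ennreal (psi f0 fU c x ?a) \<le> ennreal (psi f0 fU c x ?b + K)" .
    have "0 \<le> psi f0 fU c x ?b + K" using K0 by (simp add: psi_def)
    with h show ?thesis using ennreal_le_iff by blast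
  qed
  have l2: "psi f0 fU c x r' \<le> psi f0 fU c x r + K" (is "psi _ _ _ _ ?a \<le> psi _ _ _ _ ?b + _")
  proof -
    have "ennreal (psi f0 fU c x r') \<le> ennreal (psi f0 fU c x r) + ennreal K"
      using Psi_lip[of f0 fU L c x r' r] fin[of r] fin[of r'] by (simp add: nn tot lip fUn c x K_def abs_minus_commute)
    also have "\<dots> = ennreal (psi f0 fU c x r + K)" unfolding psi_def by (rule ennreal_plus[OF enn2real_nonneg K0, symmetric])
    finally have h: "ennreal (psi f0 fU c x ?a) \<le> ennreal (psi f0 fU c x ?b + K)" .
    have "0 \<le> psi f0 fU c x ?b + K" using K0 by (simp add: psi_def)
    with h show ?thesis using ennreal_le_iff by blast
  qed
  show "\<bar>psi f0 fU c x r - psi f0 fU c x r'\<bar> \<le> L * \<bar>r - r'\<bar> / (c\<^sup>2 * \<bar>x\<bar>)"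
    using l1 l2 unfolding K_def by linarith
qed

lemma fN_Psi:
  fixes x0 U RN :: "'a \<Rightarrow> real"
  assumes M: "prob_space M"
    and ind: "prob_space.indep_vars M (\<lambda>_. lborel) (\<lambda>k. if k = 0 then x0 else if k = 1 then U else RN) {0, 1, 2::nat}"
    and d0: "distributed M lborel x0 (\<lambda>x. ennreal (f0 x))" and f0n: "\<And>x. f0 x \<ge> 0"
    and d1: "distributed M lborel U (\<lambda>x. ennreal (fU x))" and fUn: "\<And>x. fU x \<ge> 0"
  shows "(\<integral>\<^sup>+\<omega>. ennreal (f0 (x * exp (- (c * U \<omega> + RN \<omega>))) * exp (- (c * U \<omega> + RN \<omega>))) \<partial>M)
       = (\<integral>\<^sup>+\<omega>. Psi f0 fU c x (RN \<omega>) \<partial>M)"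
proof -
  interpret prob_space M by fact
  define X where "X = (\<lambda>k::nat. if k = 0 then x0 else if k = 1 then U else RN)"
  have f0m[measurable]: "f0 \<in> borel_measurable borel" and f0i: "(\<integral>\<^sup>+x. ennreal (f0 x) \<partial>lborel) = 1"
    using dens_facts[OF M d0 f0n] by auto
  have fUm[measurable]: "fU \<in> borel_measurable borel"
    using dens_facts[OF M d1 fUn] by auto
  have "(\<integral>\<^sup>+\<omega>. ennreal (f0 (x * exp (- (c * U \<omega> + RN \<omega>))) * exp (- (c * U \<omega> + RN \<omega>))) \<partial>M)
      = (\<integral>\<^sup>+\<omega>. (\<lambda>w u r. ennreal (f0 (x * exp (- (c * u + r))) * exp (- (c * u + r)))) (X 0 \<omega>) (X 1 \<omega>) (X 2 \<omega>) \<partial>M)"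
    by (simp add: X_def)
  also have "\<dots> = (\<integral>\<^sup>+\<omega>. (\<integral>\<^sup>+u. ennreal (fU u) * (\<integral>\<^sup>+w. ennreal (f0 w) * ennreal (f0 (x * exp (- (c * u + X 2 \<omega>))) * exp (- (c * u + X 2 \<omega>))) \<partial>lborel) \<partial>lborel) \<partial>M)"
    by (rule indep3_nn_integral[OF M ind[folded X_def]]) (auto simp: X_def d0 d1)
  also have "\<dots> = (\<integral>\<^sup>+\<omega>. Psi f0 fU c x (RN \<omega>) \<partial>M)"
  proof (rule nn_integral_cong)
    fix \<omega>
    have "(\<integral>\<^sup>+u. ennreal (fU u) * (\<integral>\<^sup>+w. ennreal (f0 w) * ennreal (f0 (x * exp (- (c * u + X 2 \<omega>))) * exp (- (c * u + X 2 \<omega>))) \<partial>lborel) \<partial>lborel)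
        = (\<integral>\<^sup>+u. ennreal (fU u) * ennreal (f0 (x * exp (- (c * u + RN \<omega>))) * exp (- (c * u + RN \<omega>))) \<partial>lborel)"
    proof (rule nn_integral_cong)
      fix u
      have "(\<integral>\<^sup>+w. ennreal (f0 w) * ennreal (f0 (x * exp (- (c * u + X 2 \<omega>))) * exp (- (c * u + X 2 \<omega>))) \<partial>lborel)
          = (\<integral>\<^sup>+w. ennreal (f0 w) \<partial>lborel) * ennreal (f0 (x * exp (- (c * u + X 2 \<omega>))) * exp (- (c * u + X 2 \<omega>)))"
        by (rule nn_integral_multc) measurable
      then show "ennreal (fU u) * (\<integral>\<^sup>+w. ennreal (f0 w) * ennreal (f0 (x * exp (- (c * u + X 2 \<omega>))) * exp (- (c * u + X 2 \<omega>))) \<partial>lborel)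
          = ennreal (fU u) * ennreal (f0 (x * exp (- (c * u + RN \<omega>))) * exp (- (c * u + RN \<omega>)))"
        by (simp add: f0i X_def)
    qed
    also have "\<dots> = Psi f0 fU c x (RN \<omega>)"
      unfolding Psi_def using fUn f0n by (intro nn_integral_cong) (simp add: ennreal_mult mult_ac)
    finally show "(\<integral>\<^sup>+u. ennreal (fU u) * (\<integral>\<^sup>+w. ennreal (f0 w) * ennreal (f0 (x * exp (- (c * u + X 2 \<omega>))) * exp (- (c * u + X 2 \<omega>))) \<partial>lborel) \<partial>lborel)
        = Psi f0 fU c x (RN \<omega>)" .
  qed
  finally show ?thesis .
qed

lemma core_conv:
  fixes x0 U R :: "'a \<Rightarrow> real" and RN :: "nat \<Rightarrow> 'a \<Rightarrow> real"
  assumes M: "prob_space M"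
    and ind: "\<And>N. N \<ge> N0 \<Longrightarrow> prob_space.indep_vars M (\<lambda>_. lborel) (\<lambda>k. if k = 0 then x0 else if k = 1 then U else RN N) {0, 1, 2::nat}"
    and d0: "distributed M lborel x0 (\<lambda>x. ennreal (f0 x))" and f0n: "\<And>x. f0 x \<ge> 0"
    and d1: "distributed M lborel U (\<lambda>x. ennreal (fU x))" and fUn: "\<And>x. fU x \<ge> 0"
    and lip: "L-lipschitz_on UNIV fU" and fUb: "\<And>x. fU x \<le> B" and c: "c \<noteq> 0"
    and Rm[measurable]: "R \<in> borel_measurable M"
    and intg: "\<And>N. N \<ge> N0 \<Longrightarrow> integrable M (\<lambda>\<omega>. RN N \<omega> - R \<omega>)"
    and conv: "(\<lambda>N. \<integral>\<omega>. \<bar>RN N \<omega> - R \<omega>\<bar> \<partial>M) \<longlonglongrightarrow> 0"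
    and \<delta>: "\<delta> > 0" and \<epsilon>: "\<epsilon> > 0"
  shows "\<forall>\<^sub>F N in sequentially. \<forall>x. \<bar>x\<bar> \<ge> \<delta> \<longrightarrow>
     \<bar>enn2real (\<integral>\<^sup>+\<omega>. ennreal (f0 (x * exp (- (c * U \<omega> + RN N \<omega>))) * exp (- (c * U \<omega> + RN N \<omega>))) \<partial>M)
      - enn2real (\<integral>\<^sup>+\<omega>. Psi f0 fU c x (R \<omega>) \<partial>M)\<bar> \<le> \<epsilon>"
proof -
  interpret prob_space M by fact
  have f0m[measurable]: "f0 \<in> borel_measurable borel" and f0i: "(\<integral>\<^sup>+x. ennreal (f0 x) \<partial>lborel) = 1"
    using dens_facts[OF M d0 f0n] by auto
  have fUm[measurable]: "fU \<in> borel_measurable borel"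
    using dens_facts[OF M d1 fUn] by auto
  have L0: "L \<ge> 0" using lipschitz_on_nonneg[OF lip] .
  define \<eta> where "\<eta> = \<epsilon> * c\<^sup>2 * \<delta> / (L + 1)"
  have \<eta>0: "\<eta> > 0" using \<epsilon> \<delta> c L0 by (simp add: \<eta>_def)
  have ev1: "\<forall>\<^sub>F N in sequentially. (\<integral>\<omega>. \<bar>RN N \<omega> - R \<omega>\<bar> \<partial>M) < \<eta>"
    using order_tendstoD(2)[OF conv \<eta>0] .
  have ev2: "\<forall>\<^sub>F N in sequentially. N \<ge> N0" by (rule eventually_ge_at_top)
  show ?thesis
    using ev1 ev2
  proof eventually_elim
    case (elim N)
    have RNm[measurable]: "RN N \<in> borel_measurable M"
    proof -
      have "\<forall>i\<in>{0,1,2::nat}. (\<lambda>k. if k = 0 then x0 else if k = 1 then U else RN N) i \<in> M \<rightarrow>\<^sub>M lborel"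
        using ind[OF elim(2)] unfolding indep_vars_def by blast
      then have "(\<lambda>k. if k = 0 then x0 else if k = 1 then U else RN N) (2::nat) \<in> M \<rightarrow>\<^sub>M lborel"
        by (rule bspec) simp
      then show ?thesis by simp
    qed
    show ?case
    proof (intro allI impI)
      fix x :: real assume x\<delta>: "\<bar>x\<bar> \<ge> \<delta>"
      then have x: "x \<noteq> 0" using \<delta> by auto
      have tot: "(\<integral>\<^sup>+w. ennreal (f0 w) \<partial>lborel) \<le> 1" using f0i by simp
      note pp = psi_props[OF f0m fUm f0n tot lip fUn fUb c x]
      have e: "enn2real (\<integral>\<^sup>+\<omega>. Psi f0 fU c x (S \<omega>) \<partial>M) = (\<integral>\<omega>. psi f0 fU c x (S \<omega>) \<partial>M)"
        if [measurable]: "S \<in> borel_measurable M" for S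
      proof -
        have "(\<integral>\<omega>. psi f0 fU c x (S \<omega>) \<partial>M) = enn2real (\<integral>\<^sup>+\<omega>. ennreal (psi f0 fU c x (S \<omega>)) \<partial>M)"
          by (rule integral_eq_nn_integral) (auto simp: pp(2) psi_def)
        then show ?thesis by (simp add: pp(1)[symmetric])
      qed
      have ii: "integrable M (\<lambda>\<omega>. psi f0 fU c x (S \<omega>))" if [measurable]: "S \<in> borel_measurable M" for S
        by (rule finite_measure.integrable_const_bound[where B="B / (\<bar>c\<bar> * \<bar>x\<bar>)"])
           (auto intro!: AE_I2 simp: finite_measure_axioms abs_of_nonneg[OF pp(2)] pp(3), simp add: psi_def)
      define K where "K = L / (c\<^sup>2 * \<bar>x\<bar>)"
      have K0: "K \<ge> 0" using L0 by (simp add: K_def)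
      have "\<bar>enn2real (\<integral>\<^sup>+\<omega>. ennreal (f0 (x * exp (- (c * U \<omega> + RN N \<omega>))) * exp (- (c * U \<omega> + RN N \<omega>))) \<partial>M)
          - enn2real (\<integral>\<^sup>+\<omega>. Psi f0 fU c x (R \<omega>) \<partial>M)\<bar>
          = \<bar>(\<integral>\<omega>. psi f0 fU c x (RN N \<omega>) \<partial>M) - (\<integral>\<omega>. psi f0 fU c x (R \<omega>) \<partial>M)\<bar>"
        by (subst fN_Psi[OF M ind[OF elim(2)] d0 f0n d1 fUn]) (simp add: e)
      also have "\<dots> = \<bar>\<integral>\<omega>. psi f0 fU c x (RN N \<omega>) - psi f0 fU c x (R \<omega>) \<partial>M\<bar>"
        by (subst Bochner_Integration.integral_diff) (auto intro!: ii)
      also have "\<dots> \<le> (\<integral>\<omega>. K * \<bar>RN N \<omega> - R \<omega>\<bar> \<partial>M)"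
        by (rule integral_abs_bound[THEN order_trans], rule integral_mono)
           (auto intro!: ii integrable_abs intg[OF elim(2)] simp: K_def pp(4))
      also have "\<dots> = K * (\<integral>\<omega>. \<bar>RN N \<omega> - R \<omega>\<bar> \<partial>M)" by simp
      also have "\<dots> \<le> K * \<eta>" using elim(1) K0 by (intro mult_left_mono) auto
      also have "\<dots> \<le> \<epsilon>"
      proof -
        have "K * \<eta> = (L / (L + 1)) * (\<delta> / \<bar>x\<bar>) * \<epsilon>"
          using c x L0 by (simp add: K_def \<eta>_def field_simps power2_eq_square)
        also have "\<dots> \<le> 1 * 1 * \<epsilon>"
          using L0 x\<delta> \<delta> \<epsilon> by (intro mult_right_mono mult_mono) (auto simp: field_simps)
        finally show ?thesis by simp
      qed
      finally show "\<bar>enn2real (\<integral>\<^sup>+\<omega>. ennreal (f0 (x * exp (- (c * U \<omega> + RN N \<omega>))) * exp (- (c * U \<omega> + RN N \<omega>))) \<partial>M)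
          - enn2real (\<integral>\<^sup>+\<omega>. Psi f0 fU c x (R \<omega>) \<partial>M)\<bar> \<le> \<epsilon>" .
    qed
  qed
qed

lemma vimage_family_sub:
  assumes Y: "Y \<in> M \<rightarrow>\<^sub>M N" and f: "f \<in> N \<rightarrow>\<^sub>M K" and X: "\<And>\<omega>. \<omega> \<in> space M \<Longrightarrow> X \<omega> = f (Y \<omega>)"
  shows "{X -` A \<inter> space M | A. A \<in> sets K} \<subseteq> {Y -` B \<inter> space M | B. B \<in> sets N}"
proof
  fix E assume "E \<in> {X -` A \<inter> space M | A. A \<in> sets K}"
  then obtain A where A: "A \<in> sets K" "E = X -` A \<inter> space M" by auto
  have "f -` A \<inter> space N \<in> sets N" using f A(1) by (rule measurable_sets)
  moreover have "E = Y -` (f -` A \<inter> space N) \<inter> space M"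
    using A(2) X measurable_space[OF Y] by auto
  ultimately show "E \<in> {Y -` B \<inter> space M | B. B \<in> sets N}" by blast
qed

locale indep_setup =
  fixes M :: "'a measure" and x0 :: "'a \<Rightarrow> real" and \<xi> :: "nat \<Rightarrow> 'a \<Rightarrow> real"
  assumes prob: "prob_space M"
    and H2: "\<forall>N\<ge>2. prob_space.indep_vars M
              (\<lambda>k::nat. \<Pi>\<^sub>M j\<in>(if k = 0 then {0} else if k = 1 then {1} else {2..N}). lborel)
              (\<lambda>k \<omega>. \<lambda>j\<in>(if k = 0 then {0} else if k = 1 then {1} else {2..N}).
                   (if j = 0 then x0 \<omega> else \<xi> j \<omega>))
              {0, 1, 2}"
begin

definition S :: "nat \<Rightarrow> nat \<Rightarrow> nat set" where
  "S N k = (if k = 0 then {0} else if k = 1 then {1} else {2..N})"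

definition Xv where "Xv N k = (\<lambda>\<omega>. \<lambda>j\<in>S N k. (if j = 0 then x0 \<omega> else \<xi> j \<omega>))"

definition fam where "fam N k = {Xv N k -` B \<inter> space M | B. B \<in> sets (\<Pi>\<^sub>M j\<in>S N k. lborel)}"

definition V where "V N = (\<lambda>\<omega>. \<lambda>j\<in>{2..N}. \<xi> j \<omega>)"

definition F0 where "F0 = {x0 -` A \<inter> space M | A. A \<in> sets (lborel :: real measure)}"
definition F1 where "F1 = {\<xi> 1 -` A \<inter> space M | A. A \<in> sets (lborel :: real measure)}"
definition GN where "GN N = {V N -` B \<inter> space M | B. B \<in> sets (\<Pi>\<^sub>M j\<in>{2..N}. (lborel :: real measure))}"

lemma indN: "N \<ge> 2 \<Longrightarrow> prob_space.indep_sets M (fam N) {0, 1, 2}"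
  using H2 prob unfolding fam_def Xv_def S_def by (auto simp: prob_space.indep_vars_def2)

lemma rvN: "N \<ge> 2 \<Longrightarrow> k \<in> {0,1,2} \<Longrightarrow> Xv N k \<in> M \<rightarrow>\<^sub>M (\<Pi>\<^sub>M j\<in>S N k. lborel)"
  using H2 prob unfolding Xv_def S_def by (auto simp: prob_space.indep_vars_def2)

lemma x0_meas[measurable]: "x0 \<in> borel_measurable M"
proof -
  have "Xv 2 0 \<in> M \<rightarrow>\<^sub>M (\<Pi>\<^sub>M j\<in>S 2 0. lborel)" by (rule rvN) auto
  then have "(\<lambda>\<omega>. Xv 2 0 \<omega> 0) \<in> borel_measurable M"
    using measurable_compose[OF _ measurable_component_singleton[of 0 "S 2 0" "\<lambda>_. lborel"]] by (simp add: S_def)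
  then show ?thesis by (simp add: Xv_def S_def)
qed

lemma xi_meas[measurable]: "j \<ge> 1 \<Longrightarrow> \<xi> j \<in> borel_measurable M"
proof -
  assume j: "j \<ge> 1"
  show ?thesis
  proof (cases "j = 1")
    case True
    have "Xv 2 1 \<in> M \<rightarrow>\<^sub>M (\<Pi>\<^sub>M j\<in>S 2 1. lborel)" by (rule rvN) auto
    then have "(\<lambda>\<omega>. Xv 2 1 \<omega> 1) \<in> borel_measurable M"
      using measurable_compose[OF _ measurable_component_singleton[of 1 "S 2 1" "\<lambda>_. lborel"]] by (simp add: S_def)
    then show ?thesis using True by (simp add: Xv_def S_def)
  next
    case False
    then have j2: "j \<ge> 2" using j by simp
    have "Xv j 2 \<in> M \<rightarrow>\<^sub>M (\<Pi>\<^sub>M j\<in>S j 2. lborel)" by (rule rvN) (use j2 in auto)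
    then have "(\<lambda>\<omega>. Xv j 2 \<omega> j) \<in> borel_measurable M"
      using measurable_compose[OF _ measurable_component_singleton[of j "S j 2" "\<lambda>_. lborel"]] j2 by (simp add: S_def)
    then show ?thesis using j2 by (simp add: Xv_def S_def)
  qed
qed

lemma V_meas[measurable]: "V N \<in> M \<rightarrow>\<^sub>M (\<Pi>\<^sub>M j\<in>{2..N}. lborel)"
  unfolding V_def by (rule measurable_restrict) auto

lemma F0_sub: "N \<ge> 2 \<Longrightarrow> F0 \<subseteq> fam N 0"
  unfolding F0_def fam_def
  by (rule vimage_family_sub[OF rvN[of N 0] measurable_component_singleton[of 0 "S N 0"]]) (auto simp: S_def Xv_def)

lemma F1_sub: "N \<ge> 2 \<Longrightarrow> F1 \<subseteq> fam N 1"
  unfolding F1_def fam_def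
  by (rule vimage_family_sub[OF rvN[of N 1] measurable_component_singleton[of 1 "S N 1"]]) (auto simp: S_def Xv_def)

lemma GN_sub: "N \<ge> 2 \<Longrightarrow> GN N \<subseteq> fam N 2"
proof -
  have "S N 2 = {2..N}" by (simp add: S_def)
  moreover have "Xv N 2 = V N" by (auto simp: Xv_def V_def S_def restrict_def fun_eq_iff)
  ultimately show ?thesis unfolding GN_def fam_def by simp
qed

lemma GN_mono: "N \<le> K \<Longrightarrow> GN N \<subseteq> GN K"
  unfolding GN_def
  by (rule vimage_family_sub[where f="\<lambda>y. restrict y {2..N}"])
     (auto intro!: measurable_restrict_subset simp: V_def)

lemma indep_finite:
  fixes h :: "(nat \<Rightarrow> real) \<Rightarrow> real"
  assumes N: "N \<ge> 2" and h: "h \<in> borel_measurable (\<Pi>\<^sub>M j\<in>{2..N}. lborel)"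
  shows "prob_space.indep_vars M (\<lambda>_. lborel) (\<lambda>k. if k = 0 then x0 else if k = 1 then \<xi> 1 else (\<lambda>\<omega>. h (V N \<omega>))) {0, 1, 2::nat}"
proof -
  interpret prob_space M by (rule prob)
  show ?thesis
    unfolding indep_vars_def2
  proof (intro conjI ballI)
    fix i :: nat assume "i \<in> {0,1,2}"
    then show "random_variable lborel (if i = 0 then x0 else if i = 1 then \<xi> 1 else (\<lambda>\<omega>. h (V N \<omega>)))"
      using h by auto
  next
    show "indep_sets (\<lambda>i. {(if i = 0 then x0 else if i = 1 then \<xi> 1 else (\<lambda>\<omega>. h (V N \<omega>))) -` A \<inter> space M |A. A \<in> sets lborel}) {0, 1, 2::nat}"
    proof (rule indep_sets_mono_sets[OF indN[OF N]])
      fix i :: nat assume "i \<in> {0,1,2}"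
      then consider "i = 0" | "i = 1" | "i = 2" by auto
      then show "{(if i = 0 then x0 else if i = 1 then \<xi> 1 else (\<lambda>\<omega>. h (V N \<omega>))) -` A \<inter> space M |A. A \<in> sets lborel} \<subseteq> fam N i"
      proof cases
        case 1 then show ?thesis using F0_sub[OF N] by (simp add: F0_def)
      next
        case 2 then show ?thesis using F1_sub[OF N] by (simp add: F1_def)
      next
        case 3
        have "{(\<lambda>\<omega>. h (V N \<omega>)) -` A \<inter> space M |A. A \<in> sets lborel} \<subseteq> GN N"
          unfolding GN_def sets_lborel by (rule vimage_family_sub[OF V_meas h]) simp
        then show ?thesis using 3 GN_sub[OF N] by auto
      qed
    qed
  qed
qed

end

context indep_setup begin

definition Gall where "Gall = (\<Union>N\<in>{2..}. GN N)"

lemma GN_events: "GN N \<subseteq> sets M"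
  unfolding GN_def using V_meas by (auto intro: measurable_sets)

lemma F0_events: "F0 \<subseteq> sets M"
  unfolding F0_def by (auto intro: measurable_sets)

lemma F1_events: "F1 \<subseteq> sets M"
  unfolding F1_def using xi_meas[of 1] by (auto intro: measurable_sets)

lemma Gall_events: "Gall \<subseteq> sets M"
  unfolding Gall_def using GN_events by auto

lemma Int_stable_vimage: "Int_stable {X -` A \<inter> space M | A. A \<in> sets K}"
  unfolding Int_stable_def
proof (intro ballI)
  fix a b assume "a \<in> {X -` A \<inter> space M | A. A \<in> sets K}" "b \<in> {X -` A \<inter> space M | A. A \<in> sets K}"
  then obtain A B where "A \<in> sets K" "B \<in> sets K" "a = X -` A \<inter> space M" "b = X -` B \<inter> space M" by auto
  then show "a \<inter> b \<in> {X -` A \<inter> space M | A. A \<in> sets K}"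
    by (intro CollectI exI[of _ "A \<inter> B"]) auto
qed

lemma Int_stable_Gall: "Int_stable Gall"
  unfolding Int_stable_def
proof (intro ballI)
  fix a b assume "a \<in> Gall" "b \<in> Gall"
  then obtain N1 N2 where "N1 \<ge> 2" "N2 \<ge> 2" "a \<in> GN N1" "b \<in> GN N2" by (auto simp: Gall_def)
  then have "a \<in> GN (max N1 N2)" "b \<in> GN (max N1 N2)" using GN_mono[of N1 "max N1 N2"] GN_mono[of N2 "max N1 N2"] by auto
  moreover have "Int_stable (GN (max N1 N2))" unfolding GN_def by (rule Int_stable_vimage)
  ultimately have "a \<inter> b \<in> GN (max N1 N2)" by (simp add: Int_stable_def)
  then show "a \<inter> b \<in> Gall" using \<open>N1 \<ge> 2\<close> by (auto simp: Gall_def)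
qed

definition Fp where "Fp k = (if k = 0 then F0 else if k = (1::nat) then F1 else Gall)"

lemma indep_Fp: "prob_space.indep_sets M Fp {0, 1, 2}"
proof -
  interpret prob_space M by (rule prob)
  show ?thesis
    unfolding indep_sets_def
  proof (intro conjI ballI allI impI)
    fix i assume "i \<in> {0, 1, 2::nat}"
    then show "Fp i \<subseteq> events" using F0_events F1_events Gall_events by (auto simp: Fp_def)
  next
    fix J A assume J: "J \<subseteq> {0, 1, 2}" "J \<noteq> {}" "finite J" and A: "A \<in> Pi J Fp"
    obtain N where N: "N \<ge> 2" and AN: "2 \<in> J \<Longrightarrow> A 2 \<in> GN N"
    proof (cases "2 \<in> J")
      case True
      have "A 2 \<in> Fp 2" using Pi_mem[OF A True] .
      then have "A 2 \<in> Gall" by (simp add: Fp_def)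
      then obtain N where "N \<ge> 2" "A 2 \<in> GN N" by (auto simp: Gall_def)
      then show ?thesis using that by blast
    next
      case False then show ?thesis using that[of 2] by blast
    qed
    have "A \<in> Pi J (fam N)"
    proof
      fix j assume j: "j \<in> J"
      have Aj: "A j \<in> Fp j" using Pi_mem[OF A j] .
      from j have "j \<in> {0,1,2}" using J by auto
      then consider "j = 0" | "j = 1" | "j = 2" by auto
      then show "A j \<in> fam N j"
      proof cases
        case 1 then show ?thesis using Aj F0_sub[OF N] by (auto simp: Fp_def)
      next
        case 2 then show ?thesis using Aj F1_sub[OF N] by (auto simp: Fp_def)
      next
        case 3 then show ?thesis using AN j GN_sub[OF N] by auto
      qed
    qed
    then show "prob (\<Inter>j\<in>J. A j) = (\<Prod>j\<in>J. prob (A j))"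
      using indN[OF N] J unfolding indep_sets_def by blast
  qed
qed

lemma indep_limit:
  fixes RN :: "nat \<Rightarrow> 'a \<Rightarrow> real" and R :: "'a \<Rightarrow> real" and h :: "nat \<Rightarrow> (nat \<Rightarrow> real) \<Rightarrow> real"
  assumes hm: "\<And>N. N \<ge> 2 \<Longrightarrow> h N \<in> borel_measurable (\<Pi>\<^sub>M j\<in>{2..N}. lborel)"
    and hR: "\<And>N \<omega>. N \<ge> 2 \<Longrightarrow> \<omega> \<in> space M \<Longrightarrow> RN N \<omega> = h N (V N \<omega>)"
    and Rm[measurable]: "R \<in> borel_measurable M"
    and intg: "\<And>N. N \<ge> 2 \<Longrightarrow> integrable M (\<lambda>\<omega>. RN N \<omega> - R \<omega>)"
    and conv: "(\<lambda>N. \<integral>\<omega>. \<bar>RN N \<omega> - R \<omega>\<bar> \<partial>M) \<longlonglongrightarrow> 0"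
  shows "\<exists>R'. R' \<in> borel_measurable M \<and> (AE \<omega> in M. R \<omega> = R' \<omega>) \<and>
    prob_space.indep_vars M (\<lambda>_. lborel) (\<lambda>k. if k = 0 then x0 else if k = 1 then \<xi> 1 else R') {0, 1, 2::nat}"
proof -
  interpret prob_space M by (rule prob)
  have RNm: "RN N \<in> borel_measurable M" if "N \<ge> 2" for N
  proof -
    have "(\<lambda>\<omega>. h N (V N \<omega>)) \<in> borel_measurable M"
      using measurable_compose[OF V_meas hm[OF that]] .
    then show ?thesis using hR[OF that] by (simp cong: measurable_cong)
  qed
  have RNG: "RN N -` A \<inter> space M \<in> GN N" if "N \<ge> 2" "A \<in> sets borel" for N A
  proof -
    have "{RN N -` A \<inter> space M | A. A \<in> sets borel} \<subseteq> GN N"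
      unfolding GN_def by (rule vimage_family_sub[OF V_meas hm[OF that(1)]]) (simp add: hR that(1))
    then show ?thesis using that(2) by blast
  qed
  have u_int: "\<And>n. integrable M (\<lambda>\<omega>. RN (n + 2) \<omega> - R \<omega>)" by (rule intg) simp
  have "(\<lambda>n. \<integral>\<omega>. norm (RN (n + 2) \<omega> - R \<omega>) \<partial>M) \<longlonglongrightarrow> 0"
    using LIMSEQ_ignore_initial_segment[OF conv, of 2] by simp
  from tendsto_L1_AE_subseq[OF u_int this]
  obtain r :: "nat \<Rightarrow> nat" where r: "strict_mono r" and ae: "AE \<omega> in M. (\<lambda>n. RN (r n + 2) \<omega> - R \<omega>) \<longlonglongrightarrow> 0"
    by auto
  define R' where "R' \<omega> = lim (\<lambda>n. RN (r n + 2) \<omega>)" for \<omega>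
  have R'm[measurable]: "R' \<in> borel_measurable M"
    unfolding R'_def by (rule borel_measurable_lim_metric) (rule RNm, simp)
  have aeR: "AE \<omega> in M. R \<omega> = R' \<omega>"
    using ae
  proof eventually_elim
    case (elim \<omega>)
    then have "(\<lambda>n. RN (r n + 2) \<omega> - R \<omega> + R \<omega>) \<longlonglongrightarrow> 0 + R \<omega>" by (intro tendsto_add) auto
    then have "(\<lambda>n. RN (r n + 2) \<omega>) \<longlonglongrightarrow> R \<omega>" by simp
    then show ?case unfolding R'_def by (simp add: limI)
  qed
  define MG where "MG = sigma (space M) Gall"
  have Gsp: "Gall \<subseteq> Pow (space M)" using Gall_events sets.sets_into_space by auto
  have spMG: "space MG = space M" and setsMG: "sets MG = sigma_sets (space M) Gall"
    unfolding MG_def using Gsp by auto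
  have RNMG: "RN (r n + 2) \<in> borel_measurable MG" for n
  proof (rule measurableI)
    fix x assume "x \<in> space MG" then show "RN (r n + 2) x \<in> space borel" by simp
  next
    fix A :: "real set" assume "A \<in> sets borel"
    then have "RN (r n + 2) -` A \<inter> space M \<in> GN (r n + 2)" by (intro RNG) auto
    then have "RN (r n + 2) -` A \<inter> space M \<in> Gall" by (auto simp: Gall_def)
    then show "RN (r n + 2) -` A \<inter> space MG \<in> sets MG" by (simp add: spMG setsMG sigma_sets.Basic)
  qed
  have R'MG: "R' \<in> borel_measurable MG"
    unfolding R'_def by (rule borel_measurable_lim_metric) (rule RNMG)
  have indS: "indep_sets (\<lambda>k. sigma_sets (space M) (Fp k)) {0, 1, 2}"
  proof (rule indep_sets_sigma[OF indep_Fp])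
    fix i :: nat assume "i \<in> {0,1,2}"
    then show "Int_stable (Fp i)"
      unfolding Fp_def F0_def F1_def by (auto intro: Int_stable_vimage Int_stable_Gall)
  qed
  have "indep_vars (\<lambda>_. lborel) (\<lambda>k. if k = 0 then x0 else if k = 1 then \<xi> 1 else R') {0, 1, 2::nat}"
    unfolding indep_vars_def2
  proof (intro conjI ballI)
    fix i :: nat assume "i \<in> {0,1,2}"
    then show "random_variable lborel (if i = 0 then x0 else if i = 1 then \<xi> 1 else R')" by auto
  next
    show "indep_sets (\<lambda>i. {(if i = 0 then x0 else if i = 1 then \<xi> 1 else R') -` A \<inter> space M |A. A \<in> sets lborel}) {0, 1, 2::nat}"
    proof (rule indep_sets_mono_sets[OF indS])
      fix i :: nat assume "i \<in> {0,1,2}"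
      then consider "i = 0" | "i = 1" | "i = 2" by auto
      then show "{(if i = 0 then x0 else if i = 1 then \<xi> 1 else R') -` A \<inter> space M |A. A \<in> sets lborel} \<subseteq> sigma_sets (space M) (Fp i)"
      proof cases
        case 1 then show ?thesis by (auto simp: Fp_def F0_def intro: sigma_sets.Basic)
      next
        case 2 then show ?thesis by (auto simp: Fp_def F1_def intro: sigma_sets.Basic)
      next
        case 3
        have "R' -` A \<inter> space M \<in> sigma_sets (space M) Gall" if "A \<in> sets borel" for A
          using measurable_sets[OF R'MG that] by (simp add: spMG setsMG)
        then show ?thesis using 3 by (auto simp: Fp_def)
      qed
    qed
  qed
  then show ?thesis using R'm aeR by blast
qed

end

lemma sq_int_add:
  fixes f g :: "'a \<Rightarrow> real"
  assumes [measurable]: "f \<in> borel_measurable N" "g \<in> borel_measurable N"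
    and "integrable N (\<lambda>x. (f x)\<^sup>2)" "integrable N (\<lambda>x. (g x)\<^sup>2)"
  shows "integrable N (\<lambda>x. (f x + g x)\<^sup>2)"
proof (rule Bochner_Integration.integrable_bound)
  show "integrable N (\<lambda>x. 2 * (f x)\<^sup>2 + 2 * (g x)\<^sup>2)" using assms(3,4) by auto
  show "(\<lambda>x. (f x + g x)\<^sup>2) \<in> borel_measurable N" by measurable
  show "AE x in N. norm ((f x + g x)\<^sup>2) \<le> norm (2 * (f x)\<^sup>2 + 2 * (g x)\<^sup>2)"
  proof (rule AE_I2)
    fix x
    have "0 \<le> (f x - g x)\<^sup>2" by simp
    then have h: "(f x + g x)\<^sup>2 \<le> 2 * (f x)\<^sup>2 + 2 * (g x)\<^sup>2"
      by (simp add: power2_eq_square algebra_simps)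
    have "0 \<le> (f x + g x)\<^sup>2" "0 \<le> 2 * (f x)\<^sup>2 + 2 * (g x)\<^sup>2" by simp_all
    then show "norm ((f x + g x)\<^sup>2) \<le> norm (2 * (f x)\<^sup>2 + 2 * (g x)\<^sup>2)"
      using h by (simp only: real_norm_def abs_of_nonneg)
  qed
qed

lemma sq_int_cmult:
  fixes f :: "'a \<Rightarrow> real"
  assumes "integrable N (\<lambda>x. (f x)\<^sup>2)"
  shows "integrable N (\<lambda>x. (c * f x)\<^sup>2)"
proof -
  have "integrable N (\<lambda>x. c\<^sup>2 * (f x)\<^sup>2)" using assms by auto
  then show ?thesis by (simp add: power_mult_distrib)
qed

lemma sq_int_diff:
  fixes f g :: "'a \<Rightarrow> real"
  assumes [measurable]: "f \<in> borel_measurable N" "g \<in> borel_measurable N"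
    and "integrable N (\<lambda>x. (f x)\<^sup>2)" "integrable N (\<lambda>x. (g x)\<^sup>2)"
  shows "integrable N (\<lambda>x. (f x - g x)\<^sup>2)"
proof -
  have "integrable N (\<lambda>x. (f x + (-1) * g x)\<^sup>2)"
    by (rule sq_int_add) (auto intro: sq_int_cmult assms)
  then show ?thesis by simp
qed

lemma sq_int_sum:
  fixes f :: "nat \<Rightarrow> 'a \<Rightarrow> real"
  assumes "finite S" and m: "\<And>j. j \<in> S \<Longrightarrow> f j \<in> borel_measurable N"
    and i: "\<And>j. j \<in> S \<Longrightarrow> integrable N (\<lambda>x. (f j x)\<^sup>2)"
  shows "integrable N (\<lambda>x. (\<Sum>j\<in>S. f j x)\<^sup>2)"
  using assms
proof (induction S rule: finite_induct)
  case empty then show ?case by simp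
next
  case (insert j S)
  have "integrable N (\<lambda>x. (f j x + (\<Sum>j\<in>S. f j x))\<^sup>2)"
    by (rule sq_int_add) (use insert in \<open>auto intro!: borel_measurable_sum\<close>)
  then show ?case using insert by simp
qed

lemma sq_int_imp_int:
  fixes f :: "'a \<Rightarrow> real"
  assumes "finite_measure N" and [measurable]: "f \<in> borel_measurable N" and "integrable N (\<lambda>x. (f x)\<^sup>2)"
  shows "integrable N f"
proof (rule Bochner_Integration.integrable_bound)
  show "integrable N (\<lambda>x. 1 + (f x)\<^sup>2)" using assms by (auto simp: finite_measure.integrable_const)
  show "AE x in N. norm (f x) \<le> norm (1 + (f x)\<^sup>2)"
  proof (rule AE_I2)
    fix x
    have "\<bar>f x\<bar> \<le> 1 + (f x)\<^sup>2"
    proof (cases "\<bar>f x\<bar> \<le> 1")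
      case True then show ?thesis by (smt (verit) zero_le_power2)
    next
      case False
      then have "\<bar>f x\<bar> * 1 \<le> \<bar>f x\<bar> * \<bar>f x\<bar>" by (intro mult_left_mono) auto
      then have "\<bar>f x\<bar> \<le> (f x)\<^sup>2" by (simp add: power2_eq_square abs_mult_self_eq)
      then show ?thesis by simp
    qed
    then show "norm (f x) \<le> norm (1 + (f x)\<^sup>2)" by simp
  qed
qed simp

lemma prod_integrable:
  fixes f :: "'a \<Rightarrow> real" and g :: "'b \<Rightarrow> real"
  assumes ps: "pair_sigma_finite M1 M2" and f: "integrable M1 f" and g: "integrable M2 g"
  shows "integrable (M1 \<Otimes>\<^sub>M M2) (\<lambda>p. f (fst p) * g (snd p))"
proof (rule pair_sigma_finite.Fubini_integrable[OF ps])
  have [measurable]: "f \<in> borel_measurable M1" "g \<in> borel_measurable M2" using f g by auto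
  show "(\<lambda>p. f (fst p) * g (snd p)) \<in> borel_measurable (M1 \<Otimes>\<^sub>M M2)" by measurable
  have "integrable M1 (\<lambda>x. \<bar>f x\<bar> * (\<integral>y. \<bar>g y\<bar> \<partial>M2))" using f by auto
  then show "integrable M1 (\<lambda>x. \<integral>y. norm (f (fst (x, y)) * g (snd (x, y))) \<partial>M2)"
    by (simp add: abs_mult)
  show "AE x in M1. integrable M2 (\<lambda>y. f (fst (x, y)) * g (snd (x, y)))"
    using g by auto
qed

lemma jensen_sq:
  fixes f :: "'a \<Rightarrow> real"
  assumes M: "prob_space M" and [measurable]: "f \<in> borel_measurable M" and sq: "integrable M (\<lambda>x. (f x)\<^sup>2)"
  shows "(\<integral>x. f x \<partial>M)\<^sup>2 \<le> (\<integral>x. (f x)\<^sup>2 \<partial>M)"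
proof -
  have fi: "integrable M f" by (rule sq_int_imp_int) (use M in \<open>auto simp: sq prob_space_def\<close>)
  have "0 \<le> (\<integral>x. (f x - (\<integral>x. f x \<partial>M))\<^sup>2 \<partial>M)" by simp
  also have "\<dots> = (\<integral>x. (f x)\<^sup>2 \<partial>M) - (\<integral>x. f x \<partial>M)\<^sup>2"
    by (rule prob_space.variance_eq[OF M fi sq])
  finally show ?thesis by simp
qed

locale KLsetup =
  fixes M :: "'a measure" and t0 T :: real and a :: "real \<Rightarrow> 'a \<Rightarrow> real"
    and \<nu> :: "nat \<Rightarrow> real" and \<phi> :: "nat \<Rightarrow> real \<Rightarrow> real" and \<xi> :: "nat \<Rightarrow> 'a \<Rightarrow> real"
  assumes prob: "prob_space M" and tT: "t0 < T"
    and H1m: "(\<lambda>p. a (fst p) (snd p)) \<in> borel_measurable (time_prod t0 T M)"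
    and H1i: "integrable (time_prod t0 T M) (\<lambda>p. (a (fst p) (snd p))\<^sup>2)"
    and KL: "KL_expansion M t0 T a \<nu> \<phi> \<xi>"
begin

abbreviation "MTm \<equiv> restrict_space lborel {t0..T}"

lemma tp: "time_prod t0 T M = MTm \<Otimes>\<^sub>M M" by (simp add: time_prod_def)

lemma nu_nn: "j \<ge> 1 \<Longrightarrow> \<nu> j \<ge> 0" using KL by (simp add: KL_expansion_def)
lemma phi_L2: "j \<ge> 1 \<Longrightarrow> L2_interval t0 T (\<phi> j)" using KL by (simp add: KL_expansion_def)
lemma xi_props: "j \<ge> 1 \<Longrightarrow> \<xi> j \<in> borel_measurable M \<and> integrable M (\<lambda>\<omega>. (\<xi> j \<omega>)\<^sup>2)"
  using KL by (simp add: KL_expansion_def)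
lemma KLconv: "(\<lambda>N. \<integral>p. (a (fst p) (snd p) - proc_mean M a (fst p)
              - (\<Sum>j=1..N. sqrt (\<nu> j) * \<phi> j (fst p) * \<xi> j (snd p)))\<^sup>2 \<partial>time_prod t0 T M) \<longlonglongrightarrow> 0"
  using KL by (simp add: KL_expansion_def)

lemma spML: "space MTm = {t0..T}" by simp

lemma fm_ML: "finite_measure MTm"
proof (rule finite_measureI)
  have "emeasure MTm (space MTm) = emeasure lborel {t0..T}"
    by (subst emeasure_restrict_space) auto
  then show "emeasure MTm (space MTm) \<noteq> \<infinity>" using tT by simp
qed

lemma sf_M: "sigma_finite_measure M"
  using prob by (simp add: prob_space_imp_sigma_finite)

lemma ps: "pair_sigma_finite MTm M"
  unfolding pair_sigma_finite_def
  using fm_ML sf_M by (simp add: finite_measure.sigma_finite_measure)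

lemma fm_pair: "finite_measure (MTm \<Otimes>\<^sub>M M)"
  using finite_measure_pair_measure[OF prob_space.finite_measure[OF prob] fm_ML] .

lemma a_meas: "(\<lambda>p. a (fst p) (snd p)) \<in> borel_measurable (MTm \<Otimes>\<^sub>M M)"
  using H1m by (simp add: tp)

lemma a_sq: "integrable (MTm \<Otimes>\<^sub>M M) (\<lambda>p. (a (fst p) (snd p))\<^sup>2)"
  using H1i by (simp add: tp)

lemma a_s_meas: "s \<in> {t0..T} \<Longrightarrow> (\<lambda>\<omega>. a s \<omega>) \<in> borel_measurable M"
  using measurable_Pair2[OF a_meas, of s] by simp

lemma phi_props: "j \<ge> 1 \<Longrightarrow> \<phi> j \<in> borel_measurable MTm \<and> integrable MTm (\<lambda>s. (\<phi> j s)\<^sup>2)"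
proof -
  assume j: "j \<ge> 1"
  have "\<phi> j \<in> borel_measurable MTm" "set_integrable lborel {t0..T} (\<lambda>s. (\<phi> j s)\<^sup>2)"
    using phi_L2[OF j] by (auto simp: L2_interval_def)
  moreover have "set_integrable lborel {t0..T} g \<longleftrightarrow> integrable MTm g" for g :: "real \<Rightarrow> real"
    unfolding set_integrable_def by (subst integrable_restrict_space) auto
  ultimately show ?thesis by simp
qed

lemma mu_meas: "proc_mean M a \<in> borel_measurable MTm"
proof -
  have "(\<lambda>(s, \<omega>). a s \<omega>) \<in> borel_measurable (MTm \<Otimes>\<^sub>M M)"
    using a_meas by (simp add: split_beta')
  then show ?thesis unfolding proc_mean_def
    by (rule sigma_finite_measure.borel_measurable_lebesgue_integral[OF sf_M])
qed

lemma mu_sq: "integrable MTm (\<lambda>s. (proc_mean M a s)\<^sup>2)"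
proof (rule Bochner_Integration.integrable_bound)
  show "integrable MTm (\<lambda>s. \<integral>\<omega>. (a s \<omega>)\<^sup>2 \<partial>M)"
    using pair_sigma_finite.integrable_fst'[OF ps a_sq] by simp
  show "(\<lambda>s. (proc_mean M a s)\<^sup>2) \<in> borel_measurable MTm" using mu_meas by measurable
  have ae: "AE s in MTm. integrable M (\<lambda>\<omega>. (a s \<omega>)\<^sup>2)"
    using pair_sigma_finite.AE_integrable_fst'[OF ps a_sq] by simp
  show "AE s in MTm. norm ((proc_mean M a s)\<^sup>2) \<le> norm (\<integral>\<omega>. (a s \<omega>)\<^sup>2 \<partial>M)"
    using ae
  proof (rule AE_mp)
    show "AE s in MTm. integrable M (\<lambda>\<omega>. (a s \<omega>)\<^sup>2) \<longrightarrow> norm ((proc_mean M a s)\<^sup>2) \<le> norm (\<integral>\<omega>. (a s \<omega>)\<^sup>2 \<partial>M)"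
    proof (rule AE_I2, rule impI)
      fix s assume s: "s \<in> space MTm" and i: "integrable M (\<lambda>\<omega>. (a s \<omega>)\<^sup>2)"
      have "(proc_mean M a s)\<^sup>2 \<le> (\<integral>\<omega>. (a s \<omega>)\<^sup>2 \<partial>M)"
        unfolding proc_mean_def by (rule jensen_sq[OF prob a_s_meas i]) (use s in simp)
      moreover have "0 \<le> (\<integral>\<omega>. (a s \<omega>)\<^sup>2 \<partial>M)" by simp
      ultimately show "norm ((proc_mean M a s)\<^sup>2) \<le> norm (\<integral>\<omega>. (a s \<omega>)\<^sup>2 \<partial>M)" by simp
    qed
  qed
qed

definition D :: "nat \<Rightarrow> real \<times> 'a \<Rightarrow> real" where
  "D N p = a (fst p) (snd p) - proc_mean M a (fst p) - (\<Sum>j=1..N. sqrt (\<nu> j) * \<phi> j (fst p) * \<xi> j (snd p))"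

lemma D_meas: "D N \<in> borel_measurable (MTm \<Otimes>\<^sub>M M)"
proof -
  have [measurable]: "proc_mean M a \<in> borel_measurable MTm" by (rule mu_meas)
  have [measurable]: "\<And>j. j \<in> {1..N} \<Longrightarrow> \<phi> j \<in> borel_measurable MTm" "\<And>j. j \<in> {1..N} \<Longrightarrow> \<xi> j \<in> borel_measurable M"
    using phi_props xi_props by auto
  have [measurable]: "(\<lambda>p. a (fst p) (snd p)) \<in> borel_measurable (MTm \<Otimes>\<^sub>M M)" by (rule a_meas)
  show ?thesis unfolding D_def by measurable
qed

lemma D_sq: "integrable (MTm \<Otimes>\<^sub>M M) (\<lambda>p. (D N p)\<^sup>2)"
proof -
  have [measurable]: "proc_mean M a \<in> borel_measurable MTm" by (rule mu_meas)
  have pm[measurable]: "\<And>j. j \<in> {1..N} \<Longrightarrow> \<phi> j \<in> borel_measurable MTm" "\<And>j. j \<in> {1..N} \<Longrightarrow> \<xi> j \<in> borel_measurable M"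
    using phi_props xi_props by auto
  have [measurable]: "(\<lambda>p. a (fst p) (snd p)) \<in> borel_measurable (MTm \<Otimes>\<^sub>M M)" by (rule a_meas)
  have mu2: "integrable (MTm \<Otimes>\<^sub>M M) (\<lambda>p. (proc_mean M a (fst p))\<^sup>2)"
    using prod_integrable[OF ps mu_sq, of "\<lambda>_. 1"] prob by (simp add: prob_space_def finite_measure.integrable_const)
  have tj: "integrable (MTm \<Otimes>\<^sub>M M) (\<lambda>p. (sqrt (\<nu> j) * \<phi> j (fst p) * \<xi> j (snd p))\<^sup>2)" if "j \<in> {1..N}" for j
  proof -
    have "integrable (MTm \<Otimes>\<^sub>M M) (\<lambda>p. (\<phi> j (fst p))\<^sup>2 * (\<xi> j (snd p))\<^sup>2)"
      using prod_integrable[OF ps, of "\<lambda>s. (\<phi> j s)\<^sup>2" "\<lambda>\<omega>. (\<xi> j \<omega>)\<^sup>2"] phi_props xi_props that by auto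
    then have "integrable (MTm \<Otimes>\<^sub>M M) (\<lambda>p. (sqrt (\<nu> j) * (\<phi> j (fst p) * \<xi> j (snd p)))\<^sup>2)"
      by (intro sq_int_cmult) (simp add: power_mult_distrib)
    then show ?thesis by (simp add: mult.assoc)
  qed
  have "integrable (MTm \<Otimes>\<^sub>M M) (\<lambda>p. (a (fst p) (snd p) - proc_mean M a (fst p) - (\<Sum>j=1..N. sqrt (\<nu> j) * \<phi> j (fst p) * \<xi> j (snd p)))\<^sup>2)"
  proof (rule sq_int_diff)
    show "integrable (MTm \<Otimes>\<^sub>M M) (\<lambda>p. (a (fst p) (snd p) - proc_mean M a (fst p))\<^sup>2)"
      by (rule sq_int_diff) (auto simp: a_sq mu2)
    show "integrable (MTm \<Otimes>\<^sub>M M) (\<lambda>p. (\<Sum>j=1..N. sqrt (\<nu> j) * \<phi> j (fst p) * \<xi> j (snd p))\<^sup>2)"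
      by (rule sq_int_sum) (auto intro: tj)
  qed measurable
  then show ?thesis unfolding D_def .
qed

lemma D_int: "integrable (MTm \<Otimes>\<^sub>M M) (D N)"
  by (rule sq_int_imp_int[OF fm_pair D_meas D_sq])

lemma D_L1: "(\<lambda>N. \<integral>p. \<bar>D N p\<bar> \<partial>(MTm \<Otimes>\<^sub>M M)) \<longlonglongrightarrow> 0"
proof -
  have conv: "(\<lambda>N. \<integral>p. (D N p)\<^sup>2 \<partial>(MTm \<Otimes>\<^sub>M M)) \<longlonglongrightarrow> 0"
    using KLconv unfolding D_def tp .
  define V where "V = measure (MTm \<Otimes>\<^sub>M M) (space (MTm \<Otimes>\<^sub>M M))"
  have V0: "V \<ge> 0" by (simp add: V_def)
  show ?thesis
  proof (rule LIMSEQ_I)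
    fix r :: real assume r: "r > 0"
    define e where "e = r / (2 * (V + 1))"
    have e0: "e > 0" using r V0 by (simp add: e_def)
    have "\<forall>\<^sub>F N in sequentially. (\<integral>p. (D N p)\<^sup>2 \<partial>(MTm \<Otimes>\<^sub>M M)) < e * (r / 2)"
      by (rule order_tendstoD(2)[OF conv]) (use e0 r in simp)
    then obtain N0 where N0: "\<And>N. N \<ge> N0 \<Longrightarrow> (\<integral>p. (D N p)\<^sup>2 \<partial>(MTm \<Otimes>\<^sub>M M)) < e * (r / 2)"
      by (auto simp: eventually_sequentially)
    show "\<exists>no. \<forall>n\<ge>no. norm ((\<integral>p. \<bar>D n p\<bar> \<partial>(MTm \<Otimes>\<^sub>M M)) - 0) < r"
    proof (intro exI allI impI)
      fix N assume N: "N \<ge> N0"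
      have bnd: "\<bar>D N p\<bar> \<le> e + (D N p)\<^sup>2 / e" for p
      proof (cases "\<bar>D N p\<bar> \<le> e")
        case True then show ?thesis using e0 by (simp add: add_increasing2)
      next
        case False
        then have "e * \<bar>D N p\<bar> \<le> \<bar>D N p\<bar> * \<bar>D N p\<bar>" by (intro mult_right_mono) auto
        then have "\<bar>D N p\<bar> \<le> (D N p)\<^sup>2 / e" using e0 by (simp add: field_simps power2_eq_square abs_mult_self_eq)
        then show ?thesis using e0 by simp
      qed
      have ii: "integrable (MTm \<Otimes>\<^sub>M M) (\<lambda>p. e + (D N p)\<^sup>2 / e)"
        using D_sq[of N] fm_pair by (auto simp: finite_measure.integrable_const)
      have "(\<integral>p. \<bar>D N p\<bar> \<partial>(MTm \<Otimes>\<^sub>M M)) \<le> (\<integral>p. e + (D N p)\<^sup>2 / e \<partial>(MTm \<Otimes>\<^sub>M M))"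
        by (rule integral_mono) (auto intro: D_int ii bnd)
      also have "\<dots> = e * V + (\<integral>p. (D N p)\<^sup>2 \<partial>(MTm \<Otimes>\<^sub>M M)) / e"
        using D_sq[of N] fm_pair by (simp add: Bochner_Integration.integral_add finite_measure.integrable_const V_def mult.commute)
      also have "\<dots> < e * (V + 1) + r / 2"
      proof -
        have "(\<integral>p. (D N p)\<^sup>2 \<partial>(MTm \<Otimes>\<^sub>M M)) / e < r / 2" using N0[OF N] e0 by (simp add: field_simps)
        moreover have "e * V \<le> e * (V + 1)" using e0 by simp
        ultimately show ?thesis by linarith
      qed
      also have "\<dots> = r" using V0 by (simp add: e_def field_simps)
      finally show "norm ((\<integral>p. \<bar>D N p\<bar> \<partial>(MTm \<Otimes>\<^sub>M M)) - 0) < r" by simp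
    qed
  qed
qed

end

lemma set_integral_sum_real:
  fixes f :: "nat \<Rightarrow> real \<Rightarrow> real"
  assumes "finite S" and "\<And>j. j \<in> S \<Longrightarrow> set_integrable M A (f j)"
  shows "set_integrable M A (\<lambda>x. \<Sum>j\<in>S. f j x) \<and>
         (LINT x:A|M. (\<Sum>j\<in>S. f j x)) = (\<Sum>j\<in>S. LINT x:A|M. f j x)"
  using assms
proof (induction S rule: finite_induct)
  case empty then show ?case by (simp add: set_integrable_def set_lebesgue_integral_def)
next
  case (insert j S)
  then have IH: "set_integrable M A (\<lambda>x. \<Sum>j\<in>S. f j x)" "(LINT x:A|M. (\<Sum>j\<in>S. f j x)) = (\<Sum>j\<in>S. LINT x:A|M. f j x)"
    by auto
  have fj: "set_integrable M A (f j)" using insert by auto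
  show ?case using insert IH fj by (simp add: set_integral_add)
qed

context KLsetup begin

lemma restr_to_set:
  fixes g :: "real \<Rightarrow> real"
  assumes "integrable MTm g" and "t \<le> T"
  shows "set_integrable lborel {t0..t} g"
proof -
  have "set_integrable lborel {t0..T} g"
    using assms(1) unfolding set_integrable_def by (subst (asm) integrable_restrict_space) auto
  then show ?thesis by (rule set_integrable_subset) (use assms(2) in auto)
qed

lemma phi_int: "j \<ge> 1 \<Longrightarrow> integrable MTm (\<phi> j)"
  using phi_props[of j] by (auto intro: sq_int_imp_int[OF fm_ML])

lemma mu_int: "integrable MTm (proc_mean M a)"
  by (rule sq_int_imp_int[OF fm_ML mu_meas mu_sq])

definition Phi where "Phi t j = (LINT s:{t0..t}|lborel. \<phi> j s)"
definition mm where "mm t = (LINT s:{t0..t}|lborel. proc_mean M a s)"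

lemma Phi_mult: "(LINT s:{t0..t}|lborel. sqrt (\<nu> j) * \<phi> j s * c) = sqrt (\<nu> j) * Phi t j * c"
proof -
  have "(LINT s:{t0..t}|lborel. sqrt (\<nu> j) * \<phi> j s * c) = (LINT s:{t0..t}|lborel. (sqrt (\<nu> j) * c) * \<phi> j s)"
    by (simp add: mult_ac)
  also have "\<dots> = (sqrt (\<nu> j) * c) * Phi t j" unfolding Phi_def by (rule set_integral_mult_right)
  finally show ?thesis by (simp add: mult_ac)
qed

lemma Klin:
  assumes "t \<le> T"
  shows "K_a M t0 a \<nu> \<phi> N t y = mm t + (\<Sum>j=1..N. sqrt (\<nu> j) * Phi t j * y j)"
proof -
  have si: "set_integrable lborel {t0..t} (\<lambda>s. sqrt (\<nu> j) * \<phi> j s * y j)" if "j \<in> {1..N}" for j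
  proof -
    have "set_integrable lborel {t0..t} (\<lambda>s. (sqrt (\<nu> j) * y j) * \<phi> j s)"
      using restr_to_set[OF phi_int assms, of j] that by (intro set_integrable_mult_right) auto
    then show ?thesis by (simp add: mult_ac)
  qed
  note S = set_integral_sum_real[of "{1..N}" lborel "{t0..t}" "\<lambda>j s. sqrt (\<nu> j) * \<phi> j s * y j", OF _ si]
  have "K_a M t0 a \<nu> \<phi> N t y = (LINT s:{t0..t}|lborel. proc_mean M a s) + (LINT s:{t0..t}|lborel. (\<Sum>j=1..N. sqrt (\<nu> j) * \<phi> j s * y j))"
    unfolding K_a_def using S restr_to_set[OF mu_int assms] by (simp add: set_integral_add)
  also have "\<dots> = mm t + (\<Sum>j=1..N. sqrt (\<nu> j) * Phi t j * y j)"
  proof -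
    have "(LINT s:{t0..t}|lborel. sqrt (\<nu> j) * \<phi> j s * y j) = sqrt (\<nu> j) * Phi t j * y j" for j
      by (rule Phi_mult)
    then show ?thesis using S by (simp add: mm_def Phi_def[symmetric])
  qed
  finally show ?thesis .
qed

definition Z where "Z t \<omega> = (LINT s:{t0..t}|lborel. a s \<omega>)"

lemma Z_meas:
  assumes "t \<le> T"
  shows "Z t \<in> borel_measurable M"
proof -
  have eq: "Z t \<omega> = (\<integral>s. indicator {t0..t} s * a s \<omega> \<partial>MTm)" for \<omega>
  proof -
    have "(\<integral>s. indicator {t0..t} s * a s \<omega> \<partial>MTm) = (\<integral>s. indicator {t0..T} s *\<^sub>R (indicator {t0..t} s * a s \<omega>) \<partial>lborel)"
      by (subst integral_restrict_space) auto
    also have "\<dots> = Z t \<omega>"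
      unfolding Z_def set_lebesgue_integral_def using assms
      by (intro Bochner_Integration.integral_cong) (auto simp: indicator_def)
    finally show ?thesis by simp
  qed
  have "(\<lambda>(s, \<omega>). indicator {t0..t} s * a s \<omega>) \<in> borel_measurable (MTm \<Otimes>\<^sub>M M)"
  proof -
    have ind: "(indicator {t0..t} :: real \<Rightarrow> real) \<in> borel_measurable MTm"
      by (rule measurable_restrict_space1) measurable
    have i1: "(\<lambda>p. indicator {t0..t} (fst p) :: real) \<in> borel_measurable (MTm \<Otimes>\<^sub>M M)"
      by (rule measurable_compose[OF measurable_fst ind])
    have "(\<lambda>p. indicator {t0..t} (fst p) * a (fst p) (snd p)) \<in> borel_measurable (MTm \<Otimes>\<^sub>M M)"
      using borel_measurable_times[OF i1 a_meas] .
    then show ?thesis by (simp add: split_beta')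
  qed
  then have "(\<lambda>(\<omega>, s). indicator {t0..t} s * a s \<omega>) \<in> borel_measurable (M \<Otimes>\<^sub>M MTm)"
    by (subst measurable_pair_swap_iff) (simp add: split_beta')
  then have "(\<lambda>\<omega>. \<integral>s. indicator {t0..t} s * a s \<omega> \<partial>MTm) \<in> borel_measurable M"
    by (rule sigma_finite_measure.borel_measurable_lebesgue_integral[OF finite_measure.sigma_finite_measure[OF fm_ML]])
  then show ?thesis by (simp add: eq[abs_def])
qed

definition KN where "KN t N \<omega> = mm t + (\<Sum>j=1..N. sqrt (\<nu> j) * Phi t j * \<xi> j \<omega>)"

lemma KN_meas: "KN t N \<in> borel_measurable M"
proof -
  have [measurable]: "\<And>j. j \<in> {1..N} \<Longrightarrow> \<xi> j \<in> borel_measurable M" using xi_props by auto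
  show ?thesis unfolding KN_def by measurable
qed

definition gD where "gD N \<omega> = (\<integral>s. \<bar>D N (s, \<omega>)\<bar> \<partial>MTm)"

lemma gD_int: "integrable M (gD N)" and gD_integral: "(\<integral>\<omega>. gD N \<omega> \<partial>M) = (\<integral>p. \<bar>D N p\<bar> \<partial>(MTm \<Otimes>\<^sub>M M))"
proof -
  have i: "integrable (MTm \<Otimes>\<^sub>M M) (\<lambda>(s, \<omega>). \<bar>D N (s, \<omega>)\<bar>)"
    using D_int[of N] by (simp add: split_beta')
  show "integrable M (gD N)" unfolding gD_def using pair_sigma_finite.integrable_snd[OF ps i] by simp
  show "(\<integral>\<omega>. gD N \<omega> \<partial>M) = (\<integral>p. \<bar>D N p\<bar> \<partial>(MTm \<Otimes>\<^sub>M M))"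
    unfolding gD_def using pair_sigma_finite.integral_snd[OF ps i] by (simp add: split_beta')
qed

lemma KN_Z_bound:
  assumes t: "t \<le> T"
  shows "AE \<omega> in M. \<bar>KN t N \<omega> - Z t \<omega>\<bar> \<le> gD N \<omega>"
proof -
  have iD: "integrable (MTm \<Otimes>\<^sub>M M) (\<lambda>(s, \<omega>). D N (s, \<omega>))" using D_int[of N] by (simp add: split_beta')
  have a_int: "integrable (MTm \<Otimes>\<^sub>M M) (\<lambda>p. a (fst p) (snd p))"
    by (rule sq_int_imp_int[OF fm_pair a_meas a_sq])
  then have ia: "integrable (MTm \<Otimes>\<^sub>M M) (\<lambda>(s, \<omega>). a s \<omega>)" by (simp add: split_beta')
  have ae1: "AE \<omega> in M. integrable MTm (\<lambda>s. D N (s, \<omega>))" using pair_sigma_finite.AE_integrable_snd[OF ps iD] .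
  have ae2: "AE \<omega> in M. integrable MTm (\<lambda>s. a s \<omega>)" using pair_sigma_finite.AE_integrable_snd[OF ps ia] .
  show ?thesis using ae1 ae2
  proof eventually_elim
    case (elim \<omega>)
    have sD: "set_integrable lborel {t0..t} (\<lambda>s. D N (s, \<omega>))" by (rule restr_to_set[OF elim(1) t])
    have sa: "set_integrable lborel {t0..t} (\<lambda>s. a s \<omega>)" by (rule restr_to_set[OF elim(2) t])
    have smu: "set_integrable lborel {t0..t} (proc_mean M a)" by (rule restr_to_set[OF mu_int t])
    have sj: "set_integrable lborel {t0..t} (\<lambda>s. sqrt (\<nu> j) * \<phi> j s * \<xi> j \<omega>)" if "j \<in> {1..N}" for j
    proof -
      have "set_integrable lborel {t0..t} (\<lambda>s. (sqrt (\<nu> j) * \<xi> j \<omega>) * \<phi> j s)"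
        using restr_to_set[OF phi_int t, of j] that by (intro set_integrable_mult_right) auto
      then show ?thesis by (simp add: mult_ac)
    qed
    note S = set_integral_sum_real[of "{1..N}" lborel "{t0..t}" "\<lambda>j s. sqrt (\<nu> j) * \<phi> j s * \<xi> j \<omega>", OF _ sj]
    have pj: "(LINT s:{t0..t}|lborel. sqrt (\<nu> j) * \<phi> j s * \<xi> j \<omega>) = sqrt (\<nu> j) * Phi t j * \<xi> j \<omega>" for j
      by (rule Phi_mult)
    have "(LINT s:{t0..t}|lborel. D N (s, \<omega>)) = Z t \<omega> - mm t - (\<Sum>j=1..N. sqrt (\<nu> j) * Phi t j * \<xi> j \<omega>)"
    proof -
      have "(LINT s:{t0..t}|lborel. D N (s, \<omega>)) = (LINT s:{t0..t}|lborel. (a s \<omega> - proc_mean M a s) - (\<Sum>j=1..N. sqrt (\<nu> j) * \<phi> j s * \<xi> j \<omega>))"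
        by (simp add: D_def)
      also have "\<dots> = (LINT s:{t0..t}|lborel. a s \<omega>) - (LINT s:{t0..t}|lborel. proc_mean M a s) - (LINT s:{t0..t}|lborel. (\<Sum>j=1..N. sqrt (\<nu> j) * \<phi> j s * \<xi> j \<omega>))"
        using S sa smu by (simp add: set_integral_diff)
      also have "\<dots> = Z t \<omega> - mm t - (\<Sum>j=1..N. sqrt (\<nu> j) * Phi t j * \<xi> j \<omega>)"
        using S by (simp add: Z_def mm_def pj Phi_def[symmetric])
      finally show ?thesis .
    qed
    then have eqD: "KN t N \<omega> - Z t \<omega> = - (LINT s:{t0..t}|lborel. D N (s, \<omega>))" by (simp add: KN_def)
    have "\<bar>KN t N \<omega> - Z t \<omega>\<bar> = norm (LINT s:{t0..t}|lborel. D N (s, \<omega>))" using eqD by simp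
    also have "\<dots> \<le> (LINT s:{t0..t}|lborel. norm (D N (s, \<omega>)))" by (rule set_integral_norm_bound[OF sD])
    also have "\<dots> = (\<integral>s. indicator {t0..t} s * \<bar>D N (s, \<omega>)\<bar> \<partial>lborel)" by (simp add: set_lebesgue_integral_def)
    also have "\<dots> \<le> (\<integral>s. indicator {t0..T} s * \<bar>D N (s, \<omega>)\<bar> \<partial>lborel)"
    proof (rule integral_mono)
      have sDT: "set_integrable lborel {t0..T} (\<lambda>s. D N (s, \<omega>))"
        using elim(1) unfolding set_integrable_def by (subst (asm) integrable_restrict_space) auto
      then have "integrable lborel (\<lambda>s. \<bar>indicator {t0..T} s * D N (s, \<omega>)\<bar>)"
        unfolding set_integrable_def by auto
      then show "integrable lborel (\<lambda>s. indicator {t0..T} s * \<bar>D N (s, \<omega>)\<bar>)"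
        by (simp add: abs_mult)
      have "integrable lborel (\<lambda>s. \<bar>indicator {t0..t} s * D N (s, \<omega>)\<bar>)"
        using sD unfolding set_integrable_def by auto
      then show "integrable lborel (\<lambda>s. indicator {t0..t} s * \<bar>D N (s, \<omega>)\<bar>)"
        by (simp add: abs_mult)
      fix s
      show "indicator {t0..t} s * \<bar>D N (s, \<omega>)\<bar> \<le> indicator {t0..T} s * \<bar>D N (s, \<omega>)\<bar>"
        using t by (auto simp: indicator_def)
    qed
    also have "\<dots> = gD N \<omega>"
      unfolding gD_def by (subst integral_restrict_space) auto
    finally show ?case .
  qed
qed

lemma KN_Z_L1:
  assumes t: "t \<le> T"
  shows "integrable M (\<lambda>\<omega>. KN t N \<omega> - Z t \<omega>)" "(\<lambda>N. \<integral>\<omega>. \<bar>KN t N \<omega> - Z t \<omega>\<bar> \<partial>M) \<longlonglongrightarrow> 0"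
proof -
  have [measurable]: "Z t \<in> borel_measurable M" by (rule Z_meas[OF t])
  have [measurable]: "KN t N \<in> borel_measurable M" for N by (rule KN_meas)
  have ii: "integrable M (\<lambda>\<omega>. KN t N \<omega> - Z t \<omega>)" for N
  proof (rule Bochner_Integration.integrable_bound[OF gD_int])
    show "AE \<omega> in M. norm (KN t N \<omega> - Z t \<omega>) \<le> norm (gD N \<omega>)"
      using KN_Z_bound[OF t, of N] by eventually_elim (simp add: gD_def)
  qed measurable
  then show "integrable M (\<lambda>\<omega>. KN t N \<omega> - Z t \<omega>)" .
  show "(\<lambda>N. \<integral>\<omega>. \<bar>KN t N \<omega> - Z t \<omega>\<bar> \<partial>M) \<longlonglongrightarrow> 0"
  proof (rule tendsto_sandwich[OF _ _ tendsto_const D_L1])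
    show "\<forall>\<^sub>F N in sequentially. 0 \<le> (\<integral>\<omega>. \<bar>KN t N \<omega> - Z t \<omega>\<bar> \<partial>M)" by simp
    show "\<forall>\<^sub>F N in sequentially. (\<integral>\<omega>. \<bar>KN t N \<omega> - Z t \<omega>\<bar> \<partial>M) \<le> (\<integral>p. \<bar>D N p\<bar> \<partial>(MTm \<Otimes>\<^sub>M M))"
    proof (rule always_eventually, rule allI)
      fix N
      have "(\<integral>\<omega>. \<bar>KN t N \<omega> - Z t \<omega>\<bar> \<partial>M) \<le> (\<integral>\<omega>. gD N \<omega> \<partial>M)"
        by (rule integral_mono_AE) (auto intro: ii gD_int KN_Z_bound[OF t])
      then show "(\<integral>\<omega>. \<bar>KN t N \<omega> - Z t \<omega>\<bar> \<partial>M) \<le> (\<integral>p. \<bar>D N p\<bar> \<partial>(MTm \<Otimes>\<^sub>M M))"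
        by (simp add: gD_integral)
    qed
  qed
qed

end

context KLsetup begin

lemma f1_approx_eq:
  fixes f0 :: "real \<Rightarrow> real" and fxi :: "nat \<Rightarrow> (nat \<Rightarrow> real) \<Rightarrow> real"
  assumes t: "t \<le> T"
    and fd: "distributed M (\<Pi>\<^sub>M j\<in>{1..N}. lborel) (\<lambda>\<omega>. \<lambda>j\<in>{1..N}. \<xi> j \<omega>) (\<lambda>y. ennreal (fxi N y))"
    and fn: "\<And>y. fxi N y \<ge> 0" and f0m[measurable]: "f0 \<in> borel_measurable borel" and f0n: "\<And>x. f0 x \<ge> 0"
  shows "f1_approx M t0 a \<nu> \<phi> f0 fxi N x t
       = enn2real (\<integral>\<^sup>+\<omega>. ennreal (f0 (x * exp (- KN t N \<omega>)) * exp (- KN t N \<omega>)) \<partial>M)"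
proof -
  let ?P = "\<Pi>\<^sub>M j\<in>{1..N}. (lborel :: real measure)"
  let ?X = "\<lambda>\<omega>. \<lambda>j\<in>{1..N}. \<xi> j \<omega>"
  define F where "F y = f0 (x * exp (- K_a M t0 a \<nu> \<phi> N t y)) * exp (- K_a M t0 a \<nu> \<phi> N t y)" for y
  have Kl: "K_a M t0 a \<nu> \<phi> N t y = mm t + (\<Sum>j=1..N. sqrt (\<nu> j) * Phi t j * y j)" for y
    by (rule Klin[OF t])
  have Fm: "F \<in> borel_measurable ?P"
  proof -
    have "(\<lambda>y. f0 (x * exp (- (mm t + (\<Sum>j=1..N. sqrt (\<nu> j) * Phi t j * y j)))) * exp (- (mm t + (\<Sum>j=1..N. sqrt (\<nu> j) * Phi t j * y j)))) \<in> borel_measurable ?P"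
      by measurable
    then show ?thesis unfolding F_def Kl .
  qed
  have fxm: "(\<lambda>y. ennreal (fxi N y)) \<in> borel_measurable ?P" using fd by (simp add: distributed_def)
  have "(\<lambda>y. enn2real (ennreal (fxi N y))) \<in> borel_measurable ?P" using fxm by measurable
  then have fxm'[measurable]: "fxi N \<in> borel_measurable ?P" using fn by simp
  have Xm: "?X \<in> M \<rightarrow>\<^sub>M ?P" using fd by (simp add: distributed_def)
  have "f1_approx M t0 a \<nu> \<phi> f0 fxi N x t = (\<integral>y. fxi N y *\<^sub>R F y \<partial>?P)"
    unfolding f1_approx_def F_def by (intro Bochner_Integration.integral_cong) (simp_all add: mult_ac)
  also have "\<dots> = integral\<^sup>L (density ?P (\<lambda>y. ennreal (fxi N y))) F"
    by (rule integral_density[symmetric, OF Fm fxm']) (simp add: fn)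
  also have "\<dots> = integral\<^sup>L (distr M ?P ?X) F" using fd by (simp add: distributed_def)
  also have "\<dots> = (\<integral>\<omega>. F (?X \<omega>) \<partial>M)" by (rule integral_distr[OF Xm Fm])
  also have "\<dots> = (\<integral>\<omega>. f0 (x * exp (- KN t N \<omega>)) * exp (- KN t N \<omega>) \<partial>M)"
  proof (rule Bochner_Integration.integral_cong[OF refl])
    fix \<omega>
    have "K_a M t0 a \<nu> \<phi> N t (?X \<omega>) = KN t N \<omega>"
      unfolding Kl KN_def by (intro arg_cong2[where f="(+)"] refl sum.cong) auto
    then show "F (?X \<omega>) = f0 (x * exp (- KN t N \<omega>)) * exp (- KN t N \<omega>)" by (simp add: F_def)
  qed
  also have "\<dots> = enn2real (\<integral>\<^sup>+\<omega>. ennreal (f0 (x * exp (- KN t N \<omega>)) * exp (- KN t N \<omega>)) \<partial>M)"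
  proof (rule integral_eq_nn_integral)
    have [measurable]: "KN t N \<in> borel_measurable M" by (rule KN_meas)
    show "(\<lambda>\<omega>. f0 (x * exp (- KN t N \<omega>)) * exp (- KN t N \<omega>)) \<in> borel_measurable M" by measurable
  qed (simp add: f0n)
  finally show ?thesis .
qed

end

theorem theorem5:
  fixes M :: "'a measure" and t0 T :: real and x0 :: "'a \<Rightarrow> real"
    and a :: "real \<Rightarrow> 'a \<Rightarrow> real"
    and \<nu> :: "nat \<Rightarrow> real" and \<phi> :: "nat \<Rightarrow> real \<Rightarrow> real" and \<xi> :: "nat \<Rightarrow> 'a \<Rightarrow> real"
    and f0 :: "real \<Rightarrow> real" and fxi1 :: "real \<Rightarrow> real"
    and fxi :: "nat \<Rightarrow> (nat \<Rightarrow> real) \<Rightarrow> real"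
  assumes prob: "prob_space M" and complete: "complete_measure M"
    and tT: "t0 < T"
    and H1: "(\<lambda>p. a (fst p) (snd p)) \<in> borel_measurable (time_prod t0 T M)"
            "integrable (time_prod t0 T M) (\<lambda>p. (a (fst p) (snd p))\<^sup>2)"
    and KL: "KL_expansion M t0 T a \<nu> \<phi> \<xi>" and nu1: "\<nu> 1 > 0"
    and f0_dens: "\<forall>x. f0 x \<ge> 0" "distributed M lborel x0 (\<lambda>x. ennreal (f0 x))"
    and fxi1_dens: "\<forall>x. fxi1 x \<ge> 0" "distributed M lborel (\<xi> 1) (\<lambda>x. ennreal (fxi1 x))"
    and fxi_dens: "\<forall>N\<ge>1. (\<forall>y. fxi N y \<ge> 0) \<and>
          distributed M (\<Pi>\<^sub>M j\<in>{1..N}. lborel) (\<lambda>\<omega>. \<lambda>j\<in>{1..N}. \<xi> j \<omega>)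
            (\<lambda>y. ennreal (fxi N y))"
    and H2: "\<forall>N\<ge>2. (\<exists>g. distributed M (\<Pi>\<^sub>M j\<in>{2..N}. lborel) (\<lambda>\<omega>. \<lambda>j\<in>{2..N}. \<xi> j \<omega>) g)
          \<and> prob_space.indep_vars M
              (\<lambda>k::nat. \<Pi>\<^sub>M j\<in>(if k = 0 then {0} else if k = 1 then {1} else {2..N}). lborel)
              (\<lambda>k \<omega>. \<lambda>j\<in>(if k = 0 then {0} else if k = 1 then {1} else {2..N}).
                   (if j = 0 then x0 \<omega> else \<xi> j \<omega>))
              {0, 1, 2}"
    and H3: "\<exists>C. lipschitz_on C UNIV fxi1"
    and H4: "\<forall>t\<in>{t0<..T}. (LINT s:{t0..t}|lborel. \<phi> 1 s) \<noteq> 0"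
  shows "\<forall>t\<in>{t0<..T}. \<exists>f1 :: real \<Rightarrow> real.
           (\<forall>x. f1 x \<ge> 0)
         \<and> distributed M lborel (\<lambda>\<omega>. x0 \<omega> * exp (LINT s:{t0..t}|lborel. a s \<omega>))
             (\<lambda>x. ennreal (f1 x))
         \<and> (\<forall>\<delta>>0. \<forall>J :: real set. bounded J \<and> J \<inter> {-\<delta>..\<delta>} = {} \<longrightarrow>
              (\<forall>\<epsilon>>0. \<forall>\<^sub>F N in sequentially.
                 AE x in lborel. x \<in> J \<longrightarrow> \<bar>f1_approx M t0 a \<nu> \<phi> f0 fxi N x t - f1 x\<bar> \<le> \<epsilon>))"
proof (intro ballI)
  fix t assume tI: "t \<in> {t0<..T}"
  then have tle: "t \<le> T" and t0t: "t0 < t" by auto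
  interpret KL: KLsetup M t0 T a \<nu> \<phi> \<xi>
    by (rule KLsetup.intro[OF prob tT H1(1) H1(2) KL])
  have H2': "\<forall>N\<ge>2. prob_space.indep_vars M
              (\<lambda>k::nat. \<Pi>\<^sub>M j\<in>(if k = 0 then {0} else if k = 1 then {1} else {2..N}). lborel)
              (\<lambda>k \<omega>. \<lambda>j\<in>(if k = 0 then {0} else if k = 1 then {1} else {2..N}).
                   (if j = 0 then x0 \<omega> else \<xi> j \<omega>))
              {0, 1, 2}" using H2 by auto
  interpret IS: indep_setup M x0 \<xi>
    by (rule indep_setup.intro[OF prob H2'])
  interpret P: prob_space M by (rule prob)
  obtain L where lip: "L-lipschitz_on UNIV fxi1" using H3 by auto
  have f1n: "\<And>x. fxi1 x \<ge> 0" and f0n: "\<And>x. f0 x \<ge> 0" using fxi1_dens f0_dens by auto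
  have fUm[measurable]: "fxi1 \<in> borel_measurable borel" and fUi: "(\<integral>\<^sup>+x. ennreal (fxi1 x) \<partial>lborel) = 1"
    using dens_facts[OF prob fxi1_dens(2) f1n] by auto
  have f0m[measurable]: "f0 \<in> borel_measurable borel"
    using dens_facts[OF prob f0_dens(2) f0n] by auto
  define B where "B = 2 * (L + 1) + 1"
  have fUb: "\<And>x. fxi1 x \<le> B" unfolding B_def by (rule lip_dens_bounded[OF lip f1n fUi])
  define c where "c = sqrt (\<nu> 1) * KL.Phi t 1"
  have c: "c \<noteq> 0" using nu1 H4 tI by (simp add: c_def KL.Phi_def)
  define RN where "RN N \<omega> = KL.mm t + (\<Sum>j=2..N. sqrt (\<nu> j) * KL.Phi t j * \<xi> j \<omega>)" for N \<omega>
  have KN_split: "KL.KN t N \<omega> = c * \<xi> 1 \<omega> + RN N \<omega>" if "N \<ge> 1" for N \<omega>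
    unfolding KL.KN_def RN_def c_def using that
    by (subst sum.atLeast_Suc_atMost) (auto simp: numeral_2_eq_2)
  define R where "R \<omega> = KL.Z t \<omega> - c * \<xi> 1 \<omega>" for \<omega>
  have xi1m[measurable]: "\<xi> 1 \<in> borel_measurable M" using IS.xi_meas[of 1] by simp
  have Zm[measurable]: "KL.Z t \<in> borel_measurable M" by (rule KL.Z_meas[OF tle])
  have Rm[measurable]: "R \<in> borel_measurable M" unfolding R_def by measurable
  have diffeq: "RN N \<omega> - R \<omega> = KL.KN t N \<omega> - KL.Z t \<omega>" if "N \<ge> 1" for N \<omega>
    using KN_split[OF that, of \<omega>] by (simp add: R_def)
  define h where "h N y = KL.mm t + (\<Sum>j=2..N. sqrt (\<nu> j) * KL.Phi t j * y j)" for N and y :: "nat \<Rightarrow> real"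
  have hm: "h N \<in> borel_measurable (\<Pi>\<^sub>M j\<in>{2..N}. lborel)" for N
    unfolding h_def by measurable
  have hR: "RN N \<omega> = h N (IS.V N \<omega>)" for N \<omega>
    unfolding RN_def h_def IS.V_def by (intro arg_cong2[where f="(+)"] refl sum.cong) auto
  have RNh: "RN N = (\<lambda>\<omega>. h N (IS.V N \<omega>))" for N using hR by auto
  have indN: "prob_space.indep_vars M (\<lambda>_. lborel) (\<lambda>k. if k = 0 then x0 else if k = 1 then \<xi> 1 else RN N) {0, 1, 2::nat}"
    if "N \<ge> 2" for N
    unfolding RNh by (rule IS.indep_finite[OF that hm])
  have intg: "integrable M (\<lambda>\<omega>. RN N \<omega> - R \<omega>)" if "N \<ge> 2" for N
    using KL.KN_Z_L1(1)[OF tle, of N] that by (simp add: diffeq)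
  have conv: "(\<lambda>N. \<integral>\<omega>. \<bar>RN N \<omega> - R \<omega>\<bar> \<partial>M) \<longlonglongrightarrow> 0"
  proof -
    have "\<forall>\<^sub>F N in sequentially. (\<integral>\<omega>. \<bar>KL.KN t N \<omega> - KL.Z t \<omega>\<bar> \<partial>M) = (\<integral>\<omega>. \<bar>RN N \<omega> - R \<omega>\<bar> \<partial>M)"
      using eventually_ge_at_top[of 1] by eventually_elim (simp add: diffeq)
    from tendsto_cong[OF this] show ?thesis using KL.KN_Z_L1(2)[OF tle] by simp
  qed
  obtain R' where R'm[measurable]: "R' \<in> borel_measurable M" and aeR: "AE \<omega> in M. R \<omega> = R' \<omega>"
    and indR': "prob_space.indep_vars M (\<lambda>_. lborel) (\<lambda>k. if k = 0 then x0 else if k = 1 then \<xi> 1 else R') {0, 1, 2::nat}"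
    using IS.indep_limit[OF hm hR Rm intg conv] by blast
  define f1 where "f1 x = enn2real (\<integral>\<^sup>+\<omega>. Psi f0 fxi1 c x (R' \<omega>) \<partial>M)" for x
  have dist': "distributed M lborel (\<lambda>\<omega>. x0 \<omega> * exp (c * \<xi> 1 \<omega> + R' \<omega>)) (\<lambda>x. ennreal (f1 x))"
    unfolding f1_def by (rule core_density[OF prob indR' f0_dens(2) f0n fxi1_dens(2) f1n fUb c])
  have x0m[measurable]: "x0 \<in> borel_measurable M" by (rule IS.x0_meas)
  have dist: "distributed M lborel (\<lambda>\<omega>. x0 \<omega> * exp (LINT s:{t0..t}|lborel. a s \<omega>)) (\<lambda>x. ennreal (f1 x))"
  proof -
    have e: "(\<lambda>\<omega>. x0 \<omega> * exp (LINT s:{t0..t}|lborel. a s \<omega>)) = (\<lambda>\<omega>. x0 \<omega> * exp (c * \<xi> 1 \<omega> + R \<omega>))"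
      by (simp add: R_def KL.Z_def)
    have "distr M lborel (\<lambda>\<omega>. x0 \<omega> * exp (c * \<xi> 1 \<omega> + R \<omega>)) = distr M lborel (\<lambda>\<omega>. x0 \<omega> * exp (c * \<xi> 1 \<omega> + R' \<omega>))"
      by (rule distr_cong_AE) (use aeR in \<open>auto\<close>)
    then show ?thesis using dist' unfolding e distributed_def by simp
  qed
  have intg': "integrable M (\<lambda>\<omega>. RN N \<omega> - R' \<omega>)" if "N \<ge> 2" for N
  proof -
    have [measurable]: "RN N \<in> borel_measurable M" unfolding RNh using IS.V_meas hm[of N] by measurable
    show ?thesis using intg[OF that] by (subst integrable_cong_AE[where g="\<lambda>\<omega>. RN N \<omega> - R \<omega>"]) (use aeR in auto)
  qed
  have conv': "(\<lambda>N. \<integral>\<omega>. \<bar>RN N \<omega> - R' \<omega>\<bar> \<partial>M) \<longlonglongrightarrow> 0"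
  proof -
    have "(\<integral>\<omega>. \<bar>RN N \<omega> - R' \<omega>\<bar> \<partial>M) = (\<integral>\<omega>. \<bar>RN N \<omega> - R \<omega>\<bar> \<partial>M)" for N
    proof -
      have [measurable]: "RN N \<in> borel_measurable M" unfolding RNh using IS.V_meas hm[of N] by measurable
      show ?thesis by (rule integral_cong_AE) (use aeR in auto)
    qed
    then show ?thesis using conv by simp
  qed
  show "\<exists>f1 :: real \<Rightarrow> real.
           (\<forall>x. f1 x \<ge> 0)
         \<and> distributed M lborel (\<lambda>\<omega>. x0 \<omega> * exp (LINT s:{t0..t}|lborel. a s \<omega>))
             (\<lambda>x. ennreal (f1 x))
         \<and> (\<forall>\<delta>>0. \<forall>J :: real set. bounded J \<and> J \<inter> {-\<delta>..\<delta>} = {} \<longrightarrow>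
              (\<forall>\<epsilon>>0. \<forall>\<^sub>F N in sequentially.
                 AE x in lborel. x \<in> J \<longrightarrow> \<bar>f1_approx M t0 a \<nu> \<phi> f0 fxi N x t - f1 x\<bar> \<le> \<epsilon>))"
  proof (intro exI conjI allI impI)
    show "\<And>x. f1 x \<ge> 0" by (simp add: f1_def)
    show "distributed M lborel (\<lambda>\<omega>. x0 \<omega> * exp (LINT s:{t0..t}|lborel. a s \<omega>)) (\<lambda>x. ennreal (f1 x))"
      by (rule dist)
    fix \<delta> :: real and J :: "real set" and \<epsilon> :: real
    assume \<delta>: "\<delta> > 0" and J: "bounded J \<and> J \<inter> {-\<delta>..\<delta>} = {}" and \<epsilon>: "\<epsilon> > 0"
    have ev: "\<forall>\<^sub>F N in sequentially. \<forall>x. \<bar>x\<bar> \<ge> \<delta> \<longrightarrow>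
       \<bar>enn2real (\<integral>\<^sup>+\<omega>. ennreal (f0 (x * exp (- (c * \<xi> 1 \<omega> + RN N \<omega>))) * exp (- (c * \<xi> 1 \<omega> + RN N \<omega>))) \<partial>M)
        - enn2real (\<integral>\<^sup>+\<omega>. Psi f0 fxi1 c x (R' \<omega>) \<partial>M)\<bar> \<le> \<epsilon>"
      by (rule core_conv[OF prob indN f0_dens(2) f0n fxi1_dens(2) f1n lip fUb c R'm intg' conv' \<delta> \<epsilon>])
    show "\<forall>\<^sub>F N in sequentially. AE x in lborel. x \<in> J \<longrightarrow> \<bar>f1_approx M t0 a \<nu> \<phi> f0 fxi N x t - f1 x\<bar> \<le> \<epsilon>"
      using ev eventually_ge_at_top[of 1]
    proof eventually_elim
      case (elim N)
      have fd: "distributed M (\<Pi>\<^sub>M j\<in>{1..N}. lborel) (\<lambda>\<omega>. \<lambda>j\<in>{1..N}. \<xi> j \<omega>) (\<lambda>y. ennreal (fxi N y))"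
        and fn: "\<And>y. fxi N y \<ge> 0" using fxi_dens elim(2) by auto
      show ?case
      proof (rule AE_I2, rule impI)
        fix x assume xJ: "x \<in> J"
        have "\<bar>x\<bar> \<ge> \<delta>"
        proof (rule ccontr)
          assume "\<not> \<delta> \<le> \<bar>x\<bar>"
          then have "x \<in> {-\<delta>..\<delta>}" by auto
          with xJ J show False by auto
        qed
        moreover have "f1_approx M t0 a \<nu> \<phi> f0 fxi N x t
            = enn2real (\<integral>\<^sup>+\<omega>. ennreal (f0 (x * exp (- (c * \<xi> 1 \<omega> + RN N \<omega>))) * exp (- (c * \<xi> 1 \<omega> + RN N \<omega>))) \<partial>M)"
          using KL.f1_approx_eq[where fxi=fxi and N=N, OF tle fd fn f0m f0n, of x] by (simp add: KN_split[OF elim(2)])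
        ultimately show "\<bar>f1_approx M t0 a \<nu> \<phi> f0 fxi N x t - f1 x\<bar> \<le> \<epsilon>"
          using elim(1) unfolding f1_def by auto
      qed
    qed
  qed
qed

end
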